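(* Let $(\alpha_1,\alpha_2)\in\mathbb{C}^2$ and $p_1,p_2\in\mathbb{C}[u]\setminus\{0\}$ satisfy $p_1(u+\alpha_2/2)p_2(u+\alpha_1/2)=p_1(u-\alpha_2/2)p_2(u-\alpha_1/2)$. Then the noncommutative Kleinian fiber product $\mathcal{A}_{\alpha_1,\alpha_2}(p_1,p_2)$ is isomorphic to the twisted generalized Weyl algebra $\mathcal{A}(R,\boldsymbol{\sigma},\boldsymbol{t})$ with $R=\mathbb{C}[u]$, $\boldsymbol{\sigma}=(\sigma_1,\sigma_2)$ where $\sigma_i(u)=u-\alpha_i$, and $\boldsymbol{t}=(p_1,p_2)$.
   Context: Noncommutative Kleinian fiber product: $\tilde{\mathcal{A}}_{\alpha_1,\alpha_2}(p_1,p_2)$ is generated by $H,X_1^\pm,X_2^\pm$ with relations ($i=1,2$) $HX_i^\pm-X_i^\pm H=\pm\alpha_iX_i^\pm$, $X_i^+X_i^-=p_i(H-\alpha_i/2)$, $X_i^-X_i^+=p_i(H+\alpha_i/2)$, $X_1^+X_2^-=X_2^-X_1^+$, $X_1^-X_2^+=X_2^+X_1^-$; $\mathcal{A}_{\alpha_1,\alpha_2}(p_1,p_2)$ is its quotient by the ideal of all $a$ with $f(H)a=0$ for some nonzero polynomial $f$. TGWA: for a commutative-or-not unital $\mathbb{C}$-algebra $R$, commuting automorphisms $\sigma_i^{1/2}$ ($\sigma_i=(\sigma_i^{1/2})^2$) and central $t_i$, $\tilde{\mathcal{A}}(R,\boldsymbol{\sigma},\boldsymbol{t})$ is obtained from $R$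 by adjoining $X_i^\pm$ with $X_i^\pm r=\sigma_i^{\pm1}(r)X_i^\pm$, $X_i^\pm X_i^\mp=\sigma_i^{\pm1/2}(t_i)$, $[X_i^\pm,X_j^\mp]=0$ ($i\neq j$), graded by $\deg r=0$, $\deg X_i^\pm=\pm\mathbf{e}_i$; $\mathcal{A}(R,\boldsymbol{\sigma},\boldsymbol{t})$ is its quotient by the sum of all graded ideals intersecting $R$ trivially. Here $\sigma_i^{1/2}(u)=u-\alpha_i/2$. *)

theory Defs
  imports "HOL-Algebra.QuotRing" "HOL-Computational_Algebra.Polynomial"
begin

text \<open>Elements: finitely supported functions from words (lists of generators) to complex
  numbers; product is concatenation-convolution.\<close>

definition fa_mult :: "('g list \<Rightarrow> complex) \<Rightarrow> ('g list \<Rightarrow> complex) \<Rightarrow> 'g list \<Rightarrow> complex" where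
  "fa_mult f g = (\<lambda>w. \<Sum>k\<le>length w. f (take k w) * g (drop k w))"

definition fa_const :: "complex \<Rightarrow> 'g list \<Rightarrow> complex" where
  "fa_const c = (\<lambda>w. if w = [] then c else 0)"

definition fa_gen :: "'g \<Rightarrow> 'g list \<Rightarrow> complex" where
  "fa_gen x = (\<lambda>w. if w = [x] then 1 else 0)"

definition fa_add :: "('g list \<Rightarrow> complex) \<Rightarrow> ('g list \<Rightarrow> complex) \<Rightarrow> 'g list \<Rightarrow> complex" where
  "fa_add f g = (\<lambda>w. f w + g w)"

definition fa_smult :: "complex \<Rightarrow> ('g list \<Rightarrow> complex) \<Rightarrow> 'g list \<Rightarrow> complex" where
  "fa_smult c f = (\<lambda>w. c * f w)"

definition fa_sub :: "('g list \<Rightarrow> complex) \<Rightarrow> ('g list \<Rightarrow> complex) \<Rightarrow> 'g list \<Rightarrow> complex" where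
  "fa_sub f g = (\<lambda>w. f w - g w)"

primrec fa_pow :: "('g list \<Rightarrow> complex) \<Rightarrow> nat \<Rightarrow> 'g list \<Rightarrow> complex" where
  "fa_pow x 0 = fa_const 1"
| "fa_pow x (Suc n) = fa_mult (fa_pow x n) x"

definition fa_poly :: "complex poly \<Rightarrow> ('g list \<Rightarrow> complex) \<Rightarrow> 'g list \<Rightarrow> complex" where
  "fa_poly p x = (\<lambda>w. \<Sum>k\<le>degree p. coeff p k * fa_pow x k w)"

definition free_alg :: "('g list \<Rightarrow> complex) ring" where
  "free_alg = \<lparr>carrier = {f. finite {w. f w \<noteq> 0}}, monoid.mult = fa_mult, one = fa_const 1,
               zero = (\<lambda>_. 0), add = fa_add\<rparr>"

datatype idx = I1 | I2

text \<open>\<open>G0\<close> is \<open>H\<close> (fiber product) resp. \<open>u\<close> (TGWA over C[u]); \<open>XP i\<close>, \<open>XM i\<close> are \<open>X_i^+\<close>, \<open>X_i^-\<close>.\<close>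
datatype gen = G0 | XP idx | XM idx

abbreviation "gH \<equiv> (fa_gen G0 :: gen list \<Rightarrow> complex)"
abbreviation "gXP i \<equiv> (fa_gen (XP i) :: gen list \<Rightarrow> complex)"
abbreviation "gXM i \<equiv> (fa_gen (XM i) :: gen list \<Rightarrow> complex)"

definition shift :: "complex \<Rightarrow> complex poly \<Rightarrow> complex poly" where
  "shift c r = pcompose r [:c, 1:]"

definition kfp_rels :: "(idx \<Rightarrow> complex) \<Rightarrow> (idx \<Rightarrow> complex poly) \<Rightarrow> (gen list \<Rightarrow> complex) set" where
  "kfp_rels \<alpha> p =
     (\<Union>i. { fa_sub (fa_sub (fa_mult gH (gXP i)) (fa_mult (gXP i) gH)) (fa_smult (\<alpha> i) (gXP i)),
             fa_sub (fa_sub (fa_mult gH (gXM i)) (fa_mult (gXM i) gH)) (fa_smult (- \<alpha> i) (gXM i)),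
             fa_sub (fa_mult (gXP i) (gXM i)) (fa_poly (p i) (fa_sub gH (fa_const (\<alpha> i / 2)))),
             fa_sub (fa_mult (gXM i) (gXP i)) (fa_poly (p i) (fa_add gH (fa_const (\<alpha> i / 2)))) })
     \<union> { fa_sub (fa_mult (gXP I1) (gXM I2)) (fa_mult (gXM I2) (gXP I1)),
         fa_sub (fa_mult (gXM I1) (gXP I2)) (fa_mult (gXP I2) (gXM I1)) }"

definition kfp_tilde_ideal :: "(idx \<Rightarrow> complex) \<Rightarrow> (idx \<Rightarrow> complex poly) \<Rightarrow> (gen list \<Rightarrow> complex) set" where
  "kfp_tilde_ideal \<alpha> p = genideal free_alg (kfp_rels \<alpha> p)"

definition kfp_torsion :: "(idx \<Rightarrow> complex) \<Rightarrow> (idx \<Rightarrow> complex poly) \<Rightarrow> (gen list \<Rightarrow> complex) set" where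
  "kfp_torsion \<alpha> p = {x \<in> carrier free_alg. \<exists>f. f \<noteq> 0 \<and> fa_mult (fa_poly f gH) x \<in> kfp_tilde_ideal \<alpha> p}"

definition kfp_ideal :: "(idx \<Rightarrow> complex) \<Rightarrow> (idx \<Rightarrow> complex poly) \<Rightarrow> (gen list \<Rightarrow> complex) set" where
  "kfp_ideal \<alpha> p = genideal free_alg (kfp_tilde_ideal \<alpha> p \<union> kfp_torsion \<alpha> p)"

definition KFP :: "(idx \<Rightarrow> complex) \<Rightarrow> (idx \<Rightarrow> complex poly) \<Rightarrow> (gen list \<Rightarrow> complex) set ring" where
  "KFP \<alpha> p = free_alg Quot kfp_ideal \<alpha> p"

definition tgwa_rels :: "(idx \<Rightarrow> complex) \<Rightarrow> (idx \<Rightarrow> complex poly) \<Rightarrow> (gen list \<Rightarrow> complex) set" where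
  "tgwa_rels \<alpha> t =
     (\<Union>i. \<Union>r. { fa_sub (fa_mult (gXP i) (fa_poly r gH)) (fa_mult (fa_poly (shift (- \<alpha> i) r) gH) (gXP i)),
                 fa_sub (fa_mult (gXM i) (fa_poly r gH)) (fa_mult (fa_poly (shift (\<alpha> i) r) gH) (gXM i)) })
     \<union> (\<Union>i. { fa_sub (fa_mult (gXP i) (gXM i)) (fa_poly (shift (- \<alpha> i / 2) (t i)) gH),
              fa_sub (fa_mult (gXM i) (gXP i)) (fa_poly (shift (\<alpha> i / 2) (t i)) gH) })
     \<union> { fa_sub (fa_mult (gXP I1) (gXM I2)) (fa_mult (gXM I2) (gXP I1)),
         fa_sub (fa_mult (gXM I1) (gXP I2)) (fa_mult (gXP I2) (gXM I1)),
         fa_sub (fa_mult (gXP I2) (gXM I1)) (fa_mult (gXM I1) (gXP I2)),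
         fa_sub (fa_mult (gXM I2) (gXP I1)) (fa_mult (gXP I1) (gXM I2)) }"

definition tgwa_tilde_ideal :: "(idx \<Rightarrow> complex) \<Rightarrow> (idx \<Rightarrow> complex poly) \<Rightarrow> (gen list \<Rightarrow> complex) set" where
  "tgwa_tilde_ideal \<alpha> t = genideal free_alg (tgwa_rels \<alpha> t)"

fun gen_deg :: "gen \<Rightarrow> idx \<Rightarrow> int" where
  "gen_deg G0 = (\<lambda>_. 0)"
| "gen_deg (XP i) = (\<lambda>j. if j = i then 1 else 0)"
| "gen_deg (XM i) = (\<lambda>j. if j = i then -1 else 0)"

definition word_deg :: "gen list \<Rightarrow> idx \<Rightarrow> int" where
  "word_deg w = (\<lambda>j. sum_list (map (\<lambda>x. gen_deg x j) w))"

definition hom_comp :: "(idx \<Rightarrow> int) \<Rightarrow> (gen list \<Rightarrow> complex) \<Rightarrow> gen list \<Rightarrow> complex" where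
  "hom_comp d f = (\<lambda>w. if word_deg w = d then f w else 0)"

text \<open>Preimages \<open>J\<close> in the free algebra of graded ideals of \<open>\<tilde>A(R,\<sigma>,t)\<close> meeting (the image of) \<open>R\<close> trivially.\<close>
definition tgwa_good_ideal :: "(idx \<Rightarrow> complex) \<Rightarrow> (idx \<Rightarrow> complex poly) \<Rightarrow> (gen list \<Rightarrow> complex) set \<Rightarrow> bool" where
  "tgwa_good_ideal \<alpha> t J \<longleftrightarrow>
     ideal J free_alg \<and> tgwa_tilde_ideal \<alpha> t \<subseteq> J \<and>
     (\<forall>f\<in>J. \<forall>d. hom_comp d f \<in> J) \<and>
     (\<forall>r. fa_poly r gH \<in> J \<longrightarrow> fa_poly r gH \<in> tgwa_tilde_ideal \<alpha> t)"

definition tgwa_ideal :: "(idx \<Rightarrow> complex) \<Rightarrow> (idx \<Rightarrow> complex poly) \<Rightarrow> (gen list \<Rightarrow> complex) set" where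
  "tgwa_ideal \<alpha> t = genideal free_alg (tgwa_tilde_ideal \<alpha> t \<union> \<Union>{J. tgwa_good_ideal \<alpha> t J})"

definition TGWA :: "(idx \<Rightarrow> complex) \<Rightarrow> (idx \<Rightarrow> complex poly) \<Rightarrow> (gen list \<Rightarrow> complex) set ring" where
  "TGWA \<alpha> t = free_alg Quot tgwa_ideal \<alpha> t"

end

theory Submission
  imports Defs "HOL-Library.Poly_Mapping" "HOL-Library.Function_Algebras"
begin


datatype wd = W (unW: "gen list")

instantiation wd :: monoid_add begin
definition zero_wd where "0 = W []"
definition plus_wd where "a + b = W (unW a @ unW b)"
instance by standard (auto simp: zero_wd_def plus_wd_def)
end

lemma W_append: "W (u @ v) = W u + W v" by (simp add: plus_wd_def)
lemma W_Nil: "W [] = 0" by (simp add: zero_wd_def)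
lemma unW_add[simp]: "unW (a + b) = unW a @ unW b" by (simp add: plus_wd_def)
lemma unW_zero[simp]: "unW 0 = []" by (simp add: zero_wd_def)

type_synonym fa = "wd \<Rightarrow>\<^sub>0 complex"

abbreviation lk :: "fa \<Rightarrow> wd \<Rightarrow> complex" where "lk \<equiv> Poly_Mapping.lookup"
abbreviation sg :: "wd \<Rightarrow> complex \<Rightarrow> fa" where "sg \<equiv> Poly_Mapping.single"
abbreviation ks :: "fa \<Rightarrow> wd set" where "ks \<equiv> Poly_Mapping.keys"

lemma pm_induct[case_names zero single add]:
  assumes "P 0" "\<And>k c. P (sg k c)" "\<And>a b. P a \<Longrightarrow> P b \<Longrightarrow> P (a + b)"
  shows "P f"
proof (induction f rule: Poly_Mapping.update_induct)
  case const then show ?case using assms(1) by simp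
next
  case (update f a b)
  have "Poly_Mapping.update a b f = f + sg a b"
    using update(1) by (intro poly_mapping_eqI) (auto simp: Poly_Mapping.lookup_update Poly_Mapping.lookup_add
        Poly_Mapping.lookup_single in_keys_iff when_def)
  then show ?case using update assms by simp
qed

definition rep :: "fa \<Rightarrow> gen list \<Rightarrow> complex" where "rep a = (\<lambda>w. lk a (W w))"

lemma rep_inj: "rep a = rep b \<Longrightarrow> a = b"
  unfolding rep_def by (intro poly_mapping_eqI) (metis wd.collapse)

lemma rep_carrier: "rep a \<in> carrier free_alg"
proof -
  have sub: "{w. lk a (W w) \<noteq> 0} \<subseteq> unW ` ks a"
  proof
    fix w assume "w \<in> {w. lk a (W w) \<noteq> 0}"
    then have "W w \<in> ks a" by (simp add: in_keys_iff)
    then show "w \<in> unW ` ks a" by (metis wd.sel image_eqI)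
  qed
  have "finite {w. lk a (W w) \<noteq> 0}" by (rule finite_subset[OF sub]) simp
  then show ?thesis by (simp add: free_alg_def rep_def)
qed

lemma rep_surj: assumes "f \<in> carrier free_alg" shows "\<exists>a. f = rep a"
proof -
  have fin: "finite {w. f w \<noteq> 0}" using assms by (simp add: free_alg_def)
  have "{k. f (unW k) \<noteq> 0} \<subseteq> W ` {w. f w \<noteq> 0}"
  proof
    fix k assume "k \<in> {k. f (unW k) \<noteq> 0}"
    then show "k \<in> W ` {w. f w \<noteq> 0}" by (metis wd.collapse image_eqI mem_Collect_eq)
  qed
  then have "finite {k. f (unW k) \<noteq> 0}" using fin by (rule finite_subset[OF _ finite_imageI])
  then have "rep (Abs_poly_mapping (\<lambda>k. f (unW k))) = f" by (simp add: rep_def)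
  then show ?thesis by metis
qed

lemma rep_add: "rep (a + b) = fa_add (rep a) (rep b)"
  by (simp add: rep_def fa_add_def Poly_Mapping.lookup_add)
lemma rep_zero: "rep 0 = (\<lambda>_. 0)" by (simp add: rep_def)
lemma rep_diff: "rep (a - b) = fa_sub (rep a) (rep b)"
  by (simp add: rep_def fa_sub_def Poly_Mapping.lookup_minus)
lemma rep_uminus: "rep (- a) = (\<lambda>w. - rep a w)"
  by (simp add: rep_def)
lemma rep_single: "rep (sg (W u) c) = (\<lambda>w. if w = u then c else 0)"
  by (auto simp: rep_def Poly_Mapping.lookup_single when_def)
lemma rep_C: "rep (sg 0 c) = fa_const c"
  by (auto simp: rep_def Poly_Mapping.lookup_single when_def fa_const_def zero_wd_def)
lemma rep_one: "rep 1 = fa_const 1"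
  using rep_C[of 1] by simp

lemma fa_mult_add_left: "fa_mult (fa_add f g) h = fa_add (fa_mult f h) (fa_mult g h)"
  by (simp add: fa_mult_def fa_add_def distrib_right sum.distrib)
lemma fa_mult_add_right: "fa_mult h (fa_add f g) = fa_add (fa_mult h f) (fa_mult h g)"
  by (simp add: fa_mult_def fa_add_def distrib_left sum.distrib)
lemma fa_mult_zero_left: "fa_mult (\<lambda>_. 0) h = (\<lambda>_. 0)" by (simp add: fa_mult_def)
lemma fa_mult_zero_right: "fa_mult h (\<lambda>_. 0) = (\<lambda>_. 0)" by (simp add: fa_mult_def)

lemma fa_mult_single:
  "fa_mult (\<lambda>w. if w = u then c else 0) (\<lambda>w. if w = v then d else 0)
   = (\<lambda>w. if w = u @ v then c * d else 0)"
proof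
  fix w
  show "fa_mult (\<lambda>w. if w = u then c else 0) (\<lambda>w. if w = v then d else 0) w
     = (if w = u @ v then c * d else 0)"
  proof (cases "w = u @ v")
    case True
    have "(\<Sum>k\<le>length w. (if take k w = u then c else 0) * (if drop k w = v then d else 0))
      = (\<Sum>k\<in>{length u}. (if take k w = u then c else 0) * (if drop k w = v then d else 0))"
    proof (rule sum.mono_neutral_right)
      show "\<forall>i\<in>{..length w} - {length u}. (if take i w = u then c else 0) * (if drop i w = v then d else 0) = 0"
      proof
        fix i assume i: "i \<in> {..length w} - {length u}"
        then have "take i w \<noteq> u" by (metis DiffE atMost_iff insertI1 length_take min.absorb2)
        then show "(if take i w = u then c else 0) * (if drop i w = v then d else 0) = 0" by simp
      qed
    qed (auto simp: True)
    then show ?thesis using True by (simp add: fa_mult_def)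
  next
    case False
    have "\<And>k. (if take k w = u then c else 0) * (if drop k w = v then d else 0) = 0"
      using False by (metis append_take_drop_id mult_zero_left mult_zero_right)
    then have s: "(\<Sum>k\<le>length w. (if take k w = u then c else 0) * (if drop k w = v then d else 0)) = 0"
      by (intro sum.neutral) blast
    show ?thesis unfolding fa_mult_def using s False by simp
  qed
qed

lemma rep_mult: "rep (a * b) = fa_mult (rep a) (rep b)"
proof (induction a rule: pm_induct)
  case zero then show ?case by (simp add: rep_zero fa_mult_zero_left)
next
  case (add a1 a2) then show ?case by (simp add: distrib_right rep_add fa_mult_add_left)
next
  case (single k c)
  show ?case
  proof (induction b rule: pm_induct)
    case zero then show ?case by (simp add: rep_zero fa_mult_zero_right)
  next
    case (add b1 b2) then show ?case by (simp add: distrib_left rep_add fa_mult_add_right)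
  next
    case (single l d)
    obtain u where u: "k = W u" by (metis wd.collapse)
    obtain v where v: "l = W v" by (metis wd.collapse)
    show ?case by (simp add: Poly_Mapping.mult_single u v rep_single fa_mult_single W_append[symmetric])
  qed
qed


abbreviation FAg where "FAg \<equiv> (free_alg :: (gen list \<Rightarrow> complex) ring)"

lemma fa_ops: "x \<oplus>\<^bsub>FAg\<^esub> y = fa_add x y" "x \<otimes>\<^bsub>FAg\<^esub> y = fa_mult x y"
  "\<zero>\<^bsub>FAg\<^esub> = (\<lambda>_. 0)" "\<one>\<^bsub>FAg\<^esub> = fa_const 1"
  by (simp_all add: free_alg_def)

lemma carrier_fa: "carrier FAg = range rep"
  using rep_carrier rep_surj by (fastforce simp: image_iff)

lemma carrier_fa_E: "x \<in> carrier FAg \<Longrightarrow> (\<And>a. x = rep a \<Longrightarrow> P) \<Longrightarrow> P"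
  by (auto simp: carrier_fa)

lemma fa_add_rep: "fa_add (rep a) (rep b) = rep (a + b)" by (simp add: rep_add)
lemma fa_mult_rep: "fa_mult (rep a) (rep b) = rep (a * b)" by (simp add: rep_mult)

lemma ring_fa: "ring FAg"
proof (rule ringI)
  show "abelian_group FAg"
  proof (rule abelian_groupI)
    fix x y :: "gen list \<Rightarrow> complex" assume "x \<in> carrier FAg" "y \<in> carrier FAg"
    then obtain a b where "x = rep a" "y = rep b" by (metis carrier_fa_E)
    then show "x \<oplus>\<^bsub>FAg\<^esub> y \<in> carrier FAg"
      by (simp only: fa_ops fa_add_rep rep_carrier)
  next
    fix x y z :: "gen list \<Rightarrow> complex" assume "x \<in> carrier FAg" "y \<in> carrier FAg" "z \<in> carrier FAg"
    then obtain a b c where "x = rep a" "y = rep b" "z = rep c" by (metis carrier_fa_E)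
    then show "x \<oplus>\<^bsub>FAg\<^esub> y \<oplus>\<^bsub>FAg\<^esub> z = x \<oplus>\<^bsub>FAg\<^esub> (y \<oplus>\<^bsub>FAg\<^esub> z)"
      by (simp only: fa_ops fa_add_rep add.assoc)
  next
    fix x y :: "gen list \<Rightarrow> complex" assume "x \<in> carrier FAg" "y \<in> carrier FAg"
    then obtain a b where "x = rep a" "y = rep b" by (metis carrier_fa_E)
    then show "x \<oplus>\<^bsub>FAg\<^esub> y = y \<oplus>\<^bsub>FAg\<^esub> x"
      by (simp only: fa_ops fa_add_rep add.commute)
  next
    fix x :: "gen list \<Rightarrow> complex" assume "x \<in> carrier FAg"
    then obtain a where "x = rep a" by (metis carrier_fa_E)
    then show "\<zero>\<^bsub>FAg\<^esub> \<oplus>\<^bsub>FAg\<^esub> x = x"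
      by (simp only: fa_ops rep_zero[symmetric] fa_add_rep add_0_left)
  next
    fix x :: "gen list \<Rightarrow> complex" assume "x \<in> carrier FAg"
    then obtain a where abc: "x = rep a" by (metis carrier_fa_E)
    have "rep (- a) \<oplus>\<^bsub>FAg\<^esub> x = \<zero>\<^bsub>FAg\<^esub>"
      by (simp only: abc fa_ops rep_zero[symmetric] fa_add_rep left_minus)
    then show "\<exists>y\<in>carrier FAg. y \<oplus>\<^bsub>FAg\<^esub> x = \<zero>\<^bsub>FAg\<^esub>" using rep_carrier by blast
  next
    show "\<zero>\<^bsub>FAg\<^esub> \<in> carrier FAg" by (simp only: fa_ops rep_zero[symmetric] rep_carrier)
  qed
next
  show "monoid FAg"
  proof (rule monoidI)
    fix x y :: "gen list \<Rightarrow> complex" assume "x \<in> carrier FAg" "y \<in> carrier FAg"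
    then obtain a b where "x = rep a" "y = rep b" by (metis carrier_fa_E)
    then show "x \<otimes>\<^bsub>FAg\<^esub> y \<in> carrier FAg"
      by (simp only: fa_ops fa_mult_rep rep_carrier)
  next
    fix x y z :: "gen list \<Rightarrow> complex" assume "x \<in> carrier FAg" "y \<in> carrier FAg" "z \<in> carrier FAg"
    then obtain a b c where "x = rep a" "y = rep b" "z = rep c" by (metis carrier_fa_E)
    then show "x \<otimes>\<^bsub>FAg\<^esub> y \<otimes>\<^bsub>FAg\<^esub> z = x \<otimes>\<^bsub>FAg\<^esub> (y \<otimes>\<^bsub>FAg\<^esub> z)"
      by (simp only: fa_ops fa_mult_rep mult.assoc)
  next
    fix x :: "gen list \<Rightarrow> complex" assume "x \<in> carrier FAg"
    then obtain a where "x = rep a" by (metis carrier_fa_E)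
    then show "\<one>\<^bsub>FAg\<^esub> \<otimes>\<^bsub>FAg\<^esub> x = x"
      by (simp only: fa_ops rep_one[symmetric] fa_mult_rep mult_1_left)
  next
    fix x :: "gen list \<Rightarrow> complex" assume "x \<in> carrier FAg"
    then obtain a where "x = rep a" by (metis carrier_fa_E)
    then show "x \<otimes>\<^bsub>FAg\<^esub> \<one>\<^bsub>FAg\<^esub> = x"
      by (simp only: fa_ops rep_one[symmetric] fa_mult_rep mult_1_right)
  next
    show "\<one>\<^bsub>FAg\<^esub> \<in> carrier FAg" by (simp only: fa_ops rep_one[symmetric] rep_carrier)
  qed
next
  fix x y z :: "gen list \<Rightarrow> complex" assume "x \<in> carrier FAg" "y \<in> carrier FAg" "z \<in> carrier FAg"
  then obtain a b c where "x = rep a" "y = rep b" "z = rep c" by (metis carrier_fa_E)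
  then show "(x \<oplus>\<^bsub>FAg\<^esub> y) \<otimes>\<^bsub>FAg\<^esub> z = x \<otimes>\<^bsub>FAg\<^esub> z \<oplus>\<^bsub>FAg\<^esub> y \<otimes>\<^bsub>FAg\<^esub> z"
    "z \<otimes>\<^bsub>FAg\<^esub> (x \<oplus>\<^bsub>FAg\<^esub> y) = z \<otimes>\<^bsub>FAg\<^esub> x \<oplus>\<^bsub>FAg\<^esub> z \<otimes>\<^bsub>FAg\<^esub> y"
    by (simp_all only: fa_ops fa_mult_rep fa_add_rep distrib_right distrib_left)
qed

interpretation FA: ring "FAg" by (rule ring_fa)

lemma fa_neg: "\<ominus>\<^bsub>FAg\<^esub> rep a = rep (- a)"
proof (rule FA.minus_equality)
  have "fa_add (rep (-a)) (rep a) = (\<lambda>_. 0)" by (simp add: fa_add_def rep_def)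
  then show "rep (- a) \<oplus>\<^bsub>FAg\<^esub> rep a = \<zero>\<^bsub>FAg\<^esub>" by (simp add: fa_ops)
qed (auto simp: rep_carrier)

definition idc :: "fa set \<Rightarrow> bool" where
  "idc X \<longleftrightarrow> 0 \<in> X \<and> (\<forall>a\<in>X. \<forall>b\<in>X. a + b \<in> X) \<and> (\<forall>a\<in>X. - a \<in> X) \<and> (\<forall>a\<in>X. \<forall>c. c * a \<in> X \<and> a * c \<in> X)"

lemma idc_ideal: assumes "idc X" shows "ideal (rep ` X) FAg"
proof (rule idealI[OF ring_fa])
  show "subgroup (rep ` X) (add_monoid FAg)"
  proof (rule FA.add.subgroupI)
    show "rep ` X \<subseteq> carrier FAg" by (auto simp: rep_carrier)
    show "rep ` X \<noteq> {}" using assms by (auto simp: idc_def)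
  next
    fix x assume "x \<in> rep ` X"
    then obtain a where ab: "a \<in> X" "x = rep a" by auto
    show "\<ominus>\<^bsub>FAg\<^esub> x \<in> rep ` X"
      using fa_neg[of a] ab assms by (auto simp: idc_def)
  next
    fix x y assume "x \<in> rep ` X" "y \<in> rep ` X"
    then obtain a b where ab: "a \<in> X" "b \<in> X" "x = rep a" "y = rep b" by auto
    show "x \<oplus>\<^bsub>FAg\<^esub> y \<in> rep ` X"
      using ab assms by (auto simp: idc_def fa_ops rep_add[symmetric])
  qed
next
  fix x y assume "x \<in> rep ` X" "y \<in> carrier FAg"
  then obtain a b where ab: "a \<in> X" "x = rep a" "y = rep b" by (auto simp: carrier_fa)
  show "y \<otimes>\<^bsub>FAg\<^esub> x \<in> rep ` X" "x \<otimes>\<^bsub>FAg\<^esub> y \<in> rep ` X"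
    using ab assms by (auto simp: idc_def fa_ops rep_mult[symmetric])
qed

lemma ideal_idc: assumes "ideal J FAg" shows "idc {a. rep a \<in> J}" "J = rep ` {a. rep a \<in> J}"
proof -
  interpret ideal J FAg by fact
  show "idc {a. rep a \<in> J}"
    unfolding idc_def
  proof (intro conjI ballI allI; simp)
    show "rep 0 \<in> J" using zero_closed by (simp add: rep_zero fa_ops)
    fix a b assume "rep a \<in> J" "rep b \<in> J"
    then show "rep (a + b) \<in> J" using a_closed by (simp add: rep_add fa_ops)
  next
    fix a assume "rep a \<in> J"
    then show "rep (- a) \<in> J" using a_inv_closed fa_neg by metis
  next
    fix a c assume "rep a \<in> J"
    then show "rep (c * a) \<in> J" "rep (a * c) \<in> J"
      using I_l_closed[of "rep a" "rep c"] I_r_closed[of "rep a" "rep c"] by (simp_all add: rep_carrier rep_mult fa_ops)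
  qed
  show "J = rep ` {a. rep a \<in> J}"
  proof (rule equalityI)
    show "J \<subseteq> rep ` {a. rep a \<in> J}"
    proof (rule subsetI)
      fix x assume x: "x \<in> J"
      then have "x \<in> carrier FAg" using a_subset by blast
      then obtain a where "x = rep a" by (elim carrier_fa_E)
      then show "x \<in> rep ` {a. rep a \<in> J}" using x by blast
    qed
  qed blast
qed

definition gid :: "fa set \<Rightarrow> fa set" where "gid S = \<Inter>{X. idc X \<and> S \<subseteq> X}"

lemma idc_Inter: assumes h0: "\<And>X. X \<in> F \<Longrightarrow> idc X" shows "idc (\<Inter>F)"
proof -
  have h: "0\<in>X" "\<And>a b. a\<in>X \<Longrightarrow> b\<in>X \<Longrightarrow> a+b\<in>X" "\<And>a. a\<in>X \<Longrightarrow> -a\<in>X"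
    "\<And>a c. a\<in>X \<Longrightarrow> c*a\<in>X" "\<And>a c. a\<in>X \<Longrightarrow> a*c\<in>X" if "X \<in> F" for X
    using h0[OF that] unfolding idc_def by blast+
  show ?thesis unfolding idc_def
  proof (intro conjI ballI allI)
    show "0 \<in> \<Inter>F" using h(1) by blast
  next
    fix a b assume "a \<in> \<Inter>F" "b \<in> \<Inter>F" then show "a + b \<in> \<Inter>F" using h(2) by blast
  next
    fix a assume "a \<in> \<Inter>F" then show "-a \<in> \<Inter>F" using h(3) by blast
  next
    fix a c assume "a \<in> \<Inter>F" then show "c*a \<in> \<Inter>F" using h(4) by blast
  next
    fix a c assume "a \<in> \<Inter>F" then show "a*c \<in> \<Inter>F" using h(5) by blast
  qed
qed

lemma gid_idc: "idc (gid S)" unfolding gid_def by (rule idc_Inter) auto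
lemma gid_sub: "S \<subseteq> gid S" unfolding gid_def by auto
lemma gid_min: "idc X \<Longrightarrow> S \<subseteq> X \<Longrightarrow> gid S \<subseteq> X" unfolding gid_def by auto

lemma genideal_rep: "genideal FAg (rep ` S) = rep ` gid S"
proof
  show "genideal FAg (rep ` S) \<subseteq> rep ` gid S"
    unfolding genideal_def using idc_ideal[OF gid_idc] gid_sub by blast
next
  have i: "ideal (genideal FAg (rep ` S)) FAg"
    by (rule FA.genideal_ideal) (auto simp: rep_carrier)
  have "S \<subseteq> {a. rep a \<in> genideal FAg (rep ` S)}"
  proof -
    have "rep ` S \<subseteq> carrier FAg" by (auto simp: rep_carrier)
    then have "rep ` S \<subseteq> genideal FAg (rep ` S)" by (rule FA.genideal_self)
    then show ?thesis by auto
  qed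
  then have "gid S \<subseteq> {a. rep a \<in> genideal FAg (rep ` S)}"
    by (rule gid_min[OF ideal_idc(1)[OF i]])
  then show "rep ` gid S \<subseteq> genideal FAg (rep ` S)" by auto
qed

lemma rep_in_image[simp]: "rep a \<in> rep ` X \<longleftrightarrow> a \<in> X"
  using rep_inj by auto


definition C :: "complex \<Rightarrow> fa" where "C c = sg 0 c"
definition mn :: "gen list \<Rightarrow> fa" where "mn w = sg (W w) 1"

lemma C_mult_comm: "C c * a = a * C c"
proof (induction a rule: pm_induct)
  case (single k d) then show ?case by (simp add: C_def Poly_Mapping.mult_single mult.commute)
qed (simp_all add: distrib_left distrib_right)

lemma C_add: "C (c + d) = C c + C d" by (simp add: C_def Poly_Mapping.single_add)
lemma C_mult: "C (c * d) = C c * C d" by (simp add: C_def Poly_Mapping.mult_single)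
lemma C_0[simp]: "C 0 = 0" by (simp add: C_def)
lemma C_1[simp]: "C 1 = 1" by (simp add: C_def)
lemma C_uminus: "C (- c) = - C c" by (simp add: C_def Poly_Mapping.single_uminus)
lemma C_diff: "C (c - d) = C c - C d" by (simp add: C_def Poly_Mapping.single_diff)

lemma lookup_C_mult: "lk (C c * a) k = c * lk a k"
proof (induction a rule: pm_induct)
  case (single l d) then show ?case
    by (simp add: C_def Poly_Mapping.mult_single Poly_Mapping.lookup_single when_def)
qed (simp_all add: distrib_left Poly_Mapping.lookup_add)

lemma mon_append: "mn (u @ v) = mn u * mn v"
  by (simp add: mn_def Poly_Mapping.mult_single W_append)
lemma mon_Nil[simp]: "mn [] = 1" by (simp add: mn_def W_Nil)
lemma mon_Cons: "mn (g # w) = mn [g] * mn w"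
  using mon_append[of "[g]" w] by simp
lemma sg_eq: "sg k c = C c * mn (unW k)"
  by (simp add: C_def mn_def Poly_Mapping.mult_single)

definition pe :: "complex poly \<Rightarrow> fa \<Rightarrow> fa" where
  "pe r x = (\<Sum>k\<le>degree r. C (coeff r k) * x ^ k)"

lemma pe_bound: assumes "degree r \<le> n" shows "pe r x = (\<Sum>k\<le>n. C (coeff r k) * x ^ k)"
  unfolding pe_def
proof (rule sum.mono_neutral_left)
  show "\<forall>i\<in>{..n} - {..degree r}. C (coeff r i) * x ^ i = 0"
    by (auto simp: coeff_eq_0)
qed (use assms in auto)

lemma pe_0[simp]: "pe 0 x = 0" by (simp add: pe_def)

lemma pe_pCons: "pe (pCons a r) x = C a + x * pe r x"
proof -
  have "pe (pCons a r) x = (\<Sum>k\<le>Suc (degree r). C (coeff (pCons a r) k) * x ^ k)"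
    by (rule pe_bound) (simp add: degree_pCons_le)
  also have "\<dots> = C a + (\<Sum>k\<le>degree r. C (coeff r k) * x ^ Suc k)"
    by (subst sum.atMost_Suc_shift) simp
  also have "(\<Sum>k\<le>degree r. C (coeff r k) * x ^ Suc k) = x * pe r x"
  proof -
    have h: "\<And>c k. C c * x ^ Suc k = x * (C c * x ^ k)" by (metis C_mult_comm mult.assoc power_Suc)
    show ?thesis by (simp only: h pe_def sum_distrib_left)
  qed
  finally show ?thesis .
qed

lemma pe_const: "pe [:c:] x = C c" by (simp add: pe_pCons)

lemma pe_add: "pe (r + s) x = pe r x + pe s x"
proof (induction r arbitrary: s)
  case (pCons a r)
  show ?case
  proof (cases s)
    case (pCons b s')
    then show ?thesis by (simp only: add_pCons pe_pCons C_add pCons.IH distrib_left) (simp add: add_ac)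
  qed
qed simp

lemma pe_smult: "pe (smult c r) x = C c * pe r x"
proof (induction r)
  case (pCons a r)
  have h: "x * (C c * y) = C c * (x * y)" for y by (metis C_mult_comm mult.assoc)
  show ?case using pCons.IH
    by (simp only: smult_pCons pe_pCons C_mult distrib_left h)
qed simp

lemma pe_mult: "pe (r * s) x = pe r x * pe s x"
proof (induction r)
  case (pCons a r)
  have "pCons a r * s = smult a s + pCons 0 (r * s)" by simp
  then show ?case using pCons.IH
    by (simp only: pe_add pe_smult pe_pCons C_0 add_0_left distrib_right mult.assoc)
qed simp

lemma pe_comm: "pe r x * pe s x = pe s x * pe r x"
  by (metis pe_mult mult.commute)

lemma pe_X: "pe [:0, 1:] x = x" by (simp add: pe_pCons)

lemma pe_comm_x: "pe r x * x = x * pe r x"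
  using pe_comm[of r x "[:0,1:]"] by (simp add: pe_X)

lemma pe_pcompose: "pe (pcompose r q) x = pe r (pe q x)"
proof (induction r)
  case (pCons a r) then show ?case
    by (simp only: pcompose_pCons pe_add pe_mult pe_const pe_pCons pCons.IH pe_0 mult_zero_right add_0_right)
qed simp

lemma pe_one[simp]: "pe 1 x = 1" using pe_const[of 1 x] by (simp add: one_pCons)

lemma rep_mon: "rep (mn w) = (\<lambda>v. if v = w then 1 else 0)" by (simp add: mn_def rep_single)
lemma rep_gen: "fa_gen g = rep (mn [g])" by (simp add: rep_mon fa_gen_def)
lemma rep_pow: "fa_pow (rep x) k = rep (x ^ k)"
  by (induction k) (simp_all add: rep_one rep_mult[symmetric] power_commutes)
lemma rep_Cmult: "rep (C c * a) = fa_smult c (rep a)"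
  by (simp add: rep_def fa_smult_def lookup_C_mult)
lemma rep_pe: "fa_poly r (rep x) = rep (pe r x)"
  unfolding fa_poly_def pe_def by (simp add: rep_pow) (simp add: rep_def Poly_Mapping.lookup_sum lookup_C_mult)
lemma rep_Cc: "fa_const c = rep (C c)" by (simp add: rep_C C_def)


definition hH :: fa where "hH = mn [G0]"
definition xP :: "idx \<Rightarrow> fa" where "xP i = mn [XP i]"
definition xM :: "idx \<Rightarrow> fa" where "xM i = mn [XM i]"
definition ph :: "complex poly \<Rightarrow> fa" where "ph r = pe r hH"

definition krels :: "(idx \<Rightarrow> complex) \<Rightarrow> (idx \<Rightarrow> complex poly) \<Rightarrow> fa set" where
  "krels \<alpha> p =
     (\<Union>i. { hH * xP i - xP i * hH - C (\<alpha> i) * xP i,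
             hH * xM i - xM i * hH - C (- \<alpha> i) * xM i,
             xP i * xM i - pe (p i) (hH - C (\<alpha> i / 2)),
             xM i * xP i - pe (p i) (hH + C (\<alpha> i / 2)) })
     \<union> { xP I1 * xM I2 - xM I2 * xP I1, xM I1 * xP I2 - xP I2 * xM I1 }"

definition trels :: "(idx \<Rightarrow> complex) \<Rightarrow> (idx \<Rightarrow> complex poly) \<Rightarrow> fa set" where
  "trels \<alpha> t =
     (\<Union>i. \<Union>r. { xP i * ph r - ph (shift (- \<alpha> i) r) * xP i,
                 xM i * ph r - ph (shift (\<alpha> i) r) * xM i })
     \<union> (\<Union>i. { xP i * xM i - ph (shift (- \<alpha> i / 2) (t i)),
              xM i * xP i - ph (shift (\<alpha> i / 2) (t i)) })
     \<union> { xP I1 * xM I2 - xM I2 * xP I1, xM I1 * xP I2 - xP I2 * xM I1,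
         xP I2 * xM I1 - xM I1 * xP I2, xM I2 * xP I1 - xP I1 * xM I2 }"

lemma fa_sub_rep: "fa_sub (rep a) (rep b) = rep (a - b)" by (simp add: rep_diff)
lemma fa_smult_rep: "fa_smult c (rep a) = rep (C c * a)" by (simp add: rep_Cmult)

lemmas to_rep = rep_gen rep_Cc fa_mult_rep fa_sub_rep fa_smult_rep rep_pe fa_add_rep

lemma kfp_rels_rep: "kfp_rels \<alpha> p = rep ` krels \<alpha> p"
  unfolding kfp_rels_def krels_def hH_def xP_def xM_def
  by (simp only: to_rep image_Un image_UN image_insert image_empty)

lemma tgwa_rels_rep: "tgwa_rels \<alpha> t = rep ` trels \<alpha> t"
  unfolding tgwa_rels_def trels_def hH_def xP_def xM_def ph_def
  by (simp only: to_rep image_Un image_UN image_insert image_empty)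

lemma idc_0: "idc I \<Longrightarrow> 0 \<in> I" by (simp add: idc_def)
lemma idc_add: "idc I \<Longrightarrow> a \<in> I \<Longrightarrow> b \<in> I \<Longrightarrow> a + b \<in> I" by (simp add: idc_def)
lemma idc_neg: "idc I \<Longrightarrow> a \<in> I \<Longrightarrow> - a \<in> I" by (simp add: idc_def)
lemma idc_diff: "idc I \<Longrightarrow> a \<in> I \<Longrightarrow> b \<in> I \<Longrightarrow> a - b \<in> I"
  using idc_add[of I a "- b"] idc_neg by simp
lemma idc_lmul: "idc I \<Longrightarrow> a \<in> I \<Longrightarrow> c * a \<in> I" by (simp add: idc_def)
lemma idc_rmul: "idc I \<Longrightarrow> a \<in> I \<Longrightarrow> a * c \<in> I" by (simp add: idc_def)
lemma idc_neg_iff: "idc I \<Longrightarrow> - a \<in> I \<longleftrightarrow> a \<in> I" using idc_neg by fastforce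
lemma idc_sum: "idc I \<Longrightarrow> (\<And>k. k \<in> S \<Longrightarrow> f k \<in> I) \<Longrightarrow> sum f S \<in> I"
proof (induction S rule: infinite_finite_induct)
  case (insert x F) then show ?case by (simp add: idc_add)
qed (simp_all add: idc_0)

lemma pe_shift: "pe (shift c r) x = pe r (C c + x)"
  by (simp add: shift_def pe_pcompose pe_pCons)

lemma pe_shift_H: "pe (shift c r) hH = pe r (hH + C c)"
  by (simp add: pe_shift add.commute)

lemma shift_shift: "shift a (shift b r) = shift (a + b) r"
proof -
  have "pcompose [:b, 1:] [:a, 1:] = [:a + b, 1:]" by (simp add: pcompose_pCons one_pCons)
  then show ?thesis by (simp add: shift_def pcompose_assoc[symmetric] add.commute)
qed

lemma shift_0: "shift 0 r = r"
  by (simp add: shift_def pcompose_idR)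

lemma shift_nz: assumes "r \<noteq> 0" shows "shift c r \<noteq> 0"
proof
  assume "shift c r = 0"
  then have "shift (- c) (shift c r) = 0" by (simp add: shift_def)
  then show False using assms by (simp add: shift_shift shift_0)
qed

lemma shift_mult: "shift c (r * s) = shift c r * shift c s"
  by (simp add: shift_def pcompose_mult)

lemma shift_ph: "ph (shift c r) = pe r (hH + C c)"
  by (simp add: ph_def pe_shift_H)

lemma move_ph:
  assumes I: "idc I" and base: "X * hH - (hH + C b) * X \<in> I"
  shows "X * ph r - ph (shift b r) * X \<in> I"
proof (induction r)
  case 0 then show ?case by (simp add: ph_def shift_def idc_0[OF I])
next
  case (pCons a r)
  let ?r' = "shift b r"
  have e1: "ph (pCons a r) = C a + hH * ph r" by (simp add: ph_def pe_pCons)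
  have e2: "ph (shift b (pCons a r)) = C a + (hH + C b) * ph ?r'"
    by (simp only: shift_ph pe_pCons)
  have c: "X * C a = C a * X" by (rule C_mult_comm[symmetric])
  have "X * ph (pCons a r) - ph (shift b (pCons a r)) * X
      = (X * hH - (hH + C b) * X) * ph r + (hH + C b) * (X * ph r - ph ?r' * X)"
    unfolding e1 e2 by (simp add: algebra_simps c)
  then show ?case using idc_add[OF I idc_rmul[OF I base] idc_lmul[OF I pCons.IH]] by simp
qed

lemma gid_eq: "A \<subseteq> gid B \<Longrightarrow> B \<subseteq> gid A \<Longrightarrow> gid A = gid B"
  using gid_min[OF gid_idc] by blast

lemma pe_H_minus: "pe q (hH - C c) = ph (shift (- c) q)"
  by (simp only: shift_ph C_uminus diff_conv_add_uminus)
lemma pe_H_plus: "pe q (hH + C c) = ph (shift c q)"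
  by (simp only: shift_ph)

lemma krels_trels: "gid (krels \<alpha> p) = gid (trels \<alpha> p)"
proof (rule gid_eq)
  let ?J = "gid (trels \<alpha> p)"
  have J: "idc ?J" by (rule gid_idc)
  have T: "x \<in> ?J" if "x \<in> trels \<alpha> p" for x using that gid_sub by blast
  have ph1: "ph [:0, 1:] = hH" by (simp add: ph_def pe_X)
  have shX: "ph (shift c [:0, 1:]) = hH + C c" for c by (simp add: shift_ph pe_X)
  show "krels \<alpha> p \<subseteq> ?J"
  proof
    fix x assume "x \<in> krels \<alpha> p"
    then consider (a) i where "x = hH * xP i - xP i * hH - C (\<alpha> i) * xP i"
      | (b) i where "x = hH * xM i - xM i * hH - C (- \<alpha> i) * xM i"
      | (c) i where "x = xP i * xM i - pe (p i) (hH - C (\<alpha> i / 2))"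
      | (d) i where "x = xM i * xP i - pe (p i) (hH + C (\<alpha> i / 2))"
      | (e) "x = xP I1 * xM I2 - xM I2 * xP I1" | (f) "x = xM I1 * xP I2 - xP I2 * xM I1"
      unfolding krels_def by blast
    then show "x \<in> ?J"
    proof cases
      case (a i)
      have "xP i * ph [:0,1:] - ph (shift (- \<alpha> i) [:0,1:]) * xP i \<in> ?J" by (rule T) (auto simp: trels_def)
      then have "- (xP i * hH - (hH + C (- \<alpha> i)) * xP i) \<in> ?J" unfolding ph1 shX by (rule idc_neg[OF J])
      moreover have "- (xP i * hH - (hH + C (- \<alpha> i)) * xP i) = x" by (simp add: a algebra_simps C_uminus)
      ultimately show ?thesis by simp
    next
      case (b i)
      have "xM i * ph [:0,1:] - ph (shift (\<alpha> i) [:0,1:]) * xM i \<in> ?J" by (rule T) (auto simp: trels_def)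
      then have "- (xM i * hH - (hH + C (\<alpha> i)) * xM i) \<in> ?J" unfolding ph1 shX by (rule idc_neg[OF J])
      moreover have "- (xM i * hH - (hH + C (\<alpha> i)) * xM i) = x" by (simp add: b algebra_simps C_uminus)
      ultimately show ?thesis by simp
    next
      case (c i)
      have "xP i * xM i - ph (shift (- \<alpha> i / 2) (p i)) \<in> ?J" by (rule T) (auto simp: trels_def)
      then show ?thesis by (simp add: c pe_H_minus)
    next
      case (d i)
      have "xM i * xP i - ph (shift (\<alpha> i / 2) (p i)) \<in> ?J" by (rule T) (auto simp: trels_def)
      then show ?thesis by (simp add: d pe_H_plus)
    next
      case e then show ?thesis by (intro T) (auto simp: trels_def)
    next
      case f then show ?thesis by (intro T) (auto simp: trels_def)
    qed
  qed
next
  let ?J = "gid (krels \<alpha> p)"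
  have J: "idc ?J" by (rule gid_idc)
  have K: "x \<in> ?J" if "x \<in> krels \<alpha> p" for x using that gid_sub by blast
  have bP: "xP i * hH - (hH + C (- \<alpha> i)) * xP i \<in> ?J" for i
  proof -
    have "hH * xP i - xP i * hH - C (\<alpha> i) * xP i \<in> ?J" by (rule K) (auto simp: krels_def)
    then have m: "- (hH * xP i - xP i * hH - C (\<alpha> i) * xP i) \<in> ?J" by (rule idc_neg[OF J])
    have e: "- (hH * xP i - xP i * hH - C (\<alpha> i) * xP i) = xP i * hH - (hH + C (- \<alpha> i)) * xP i"
      by (simp add: algebra_simps C_uminus)
    show ?thesis using m unfolding e .
  qed
  have bM: "xM i * hH - (hH + C (\<alpha> i)) * xM i \<in> ?J" for i
  proof -
    have "hH * xM i - xM i * hH - C (- \<alpha> i) * xM i \<in> ?J" by (rule K) (auto simp: krels_def)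
    then have m: "- (hH * xM i - xM i * hH - C (- \<alpha> i) * xM i) \<in> ?J" by (rule idc_neg[OF J])
    have e: "- (hH * xM i - xM i * hH - C (- \<alpha> i) * xM i) = xM i * hH - (hH + C (\<alpha> i)) * xM i"
      by (simp add: algebra_simps C_uminus)
    show ?thesis using m unfolding e .
  qed
  show "trels \<alpha> p \<subseteq> ?J"
  proof
    fix x assume "x \<in> trels \<alpha> p"
    then consider (a) i r where "x = xP i * ph r - ph (shift (- \<alpha> i) r) * xP i"
      | (b) i r where "x = xM i * ph r - ph (shift (\<alpha> i) r) * xM i"
      | (c) i where "x = xP i * xM i - ph (shift (- \<alpha> i / 2) (p i))"
      | (d) i where "x = xM i * xP i - ph (shift (\<alpha> i / 2) (p i))"
      | (e) "x = xP I1 * xM I2 - xM I2 * xP I1" | (f) "x = xM I1 * xP I2 - xP I2 * xM I1"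
      | (g) "x = xP I2 * xM I1 - xM I1 * xP I2" | (h) "x = xM I2 * xP I1 - xP I1 * xM I2"
      unfolding trels_def by blast
    then show "x \<in> ?J"
    proof cases
      case (a i r) then show ?thesis using move_ph[OF J bP] by simp
    next
      case (b i r) then show ?thesis using move_ph[OF J bM] by simp
    next
      case (c i)
      have "xP i * xM i - pe (p i) (hH - C (\<alpha> i / 2)) \<in> ?J" by (rule K) (auto simp: krels_def)
      then show ?thesis by (simp add: c pe_H_minus)
    next
      case (d i)
      have "xM i * xP i - pe (p i) (hH + C (\<alpha> i / 2)) \<in> ?J" by (rule K) (auto simp: krels_def)
      then show ?thesis by (simp add: d pe_H_plus)
    next
      case e then show ?thesis by (intro K) (auto simp: krels_def)
    next
      case f then show ?thesis by (intro K) (auto simp: krels_def)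
    next
      case g
      have "xM I1 * xP I2 - xP I2 * xM I1 \<in> ?J" by (rule K) (auto simp: krels_def)
      then have "- (xM I1 * xP I2 - xP I2 * xM I1) \<in> ?J" by (rule idc_neg[OF J])
      then show ?thesis by (simp add: g)
    next
      case h
      have "xP I1 * xM I2 - xM I2 * xP I1 \<in> ?J" by (rule K) (auto simp: krels_def)
      then have "- (xP I1 * xM I2 - xM I2 * xP I1) \<in> ?J" by (rule idc_neg[OF J])
      then show ?thesis by (simp add: h)
    qed
  qed
qed


abbreviation I0 :: "(idx \<Rightarrow> complex) \<Rightarrow> (idx \<Rightarrow> complex poly) \<Rightarrow> fa set" where
  "I0 \<alpha> p \<equiv> gid (trels \<alpha> p)"

lemma I0_idc: "idc (I0 \<alpha> p)" by (rule gid_idc)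
lemma I0_rel: "x \<in> trels \<alpha> p \<Longrightarrow> x \<in> I0 \<alpha> p" using gid_sub by blast

fun wsh :: "(idx \<Rightarrow> complex) \<Rightarrow> gen \<Rightarrow> complex" where
  "wsh \<alpha> G0 = 0" | "wsh \<alpha> (XP i) = - \<alpha> i" | "wsh \<alpha> (XM i) = \<alpha> i"

definition ws :: "(idx \<Rightarrow> complex) \<Rightarrow> gen list \<Rightarrow> complex" where
  "ws \<alpha> w = sum_list (map (wsh \<alpha>) w)"

lemma gen_ph: "mn [g] * ph r - ph (shift (wsh \<alpha> g) r) * mn [g] \<in> I0 \<alpha> p"
proof (cases g)
  case G0
  have "hH * ph r - ph r * hH = 0" using pe_comm_x[of r hH] by (simp add: ph_def)
  then show ?thesis using G0 by (simp add: hH_def[symmetric] shift_0 idc_0[OF I0_idc])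
next
  case (XP i) then show ?thesis by (intro I0_rel) (auto simp: trels_def xP_def)
next
  case (XM i) then show ?thesis by (intro I0_rel) (auto simp: trels_def xM_def)
qed

lemma mn_ph: "mn w * ph r - ph (shift (ws \<alpha> w) r) * mn w \<in> I0 \<alpha> p"
proof (induction w arbitrary: r)
  case Nil then show ?case by (simp add: ws_def shift_0 idc_0[OF I0_idc])
next
  case (Cons g w)
  let ?q = "shift (ws \<alpha> w) r"
  have e: "mn (g # w) * ph r - ph (shift (ws \<alpha> (g # w)) r) * mn (g # w)
     = mn [g] * (mn w * ph r - ph ?q * mn w) + (mn [g] * ph ?q - ph (shift (wsh \<alpha> g) ?q) * mn [g]) * mn w"
    by (simp add: mon_Cons[of g w] ws_def shift_shift algebra_simps)
  show ?case unfolding e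
    by (rule idc_add[OF I0_idc idc_lmul[OF I0_idc Cons.IH] idc_rmul[OF I0_idc gen_ph]])
qed

definition tor :: "(idx \<Rightarrow> complex) \<Rightarrow> (idx \<Rightarrow> complex poly) \<Rightarrow> fa set" where
  "tor \<alpha> p = {x. \<exists>f. f \<noteq> 0 \<and> ph f * x \<in> I0 \<alpha> p}"

lemma ph_mult: "ph (f * g) = ph f * ph g" by (simp add: ph_def pe_mult)
lemma ph_comm: "ph f * ph g = ph g * ph f" by (simp add: ph_def pe_comm)
lemma ph_one: "ph 1 = 1" by (simp add: ph_def)

lemma I0_tor: "I0 \<alpha> p \<subseteq> tor \<alpha> p"
  unfolding tor_def by (auto intro!: exI[of _ 1] simp: ph_one)

lemma tor_add: assumes "x \<in> tor \<alpha> p" "y \<in> tor \<alpha> p" shows "x + y \<in> tor \<alpha> p"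
proof -
  obtain f where f: "f \<noteq> 0" "ph f * x \<in> I0 \<alpha> p" using assms(1) by (auto simp: tor_def)
  obtain g where g: "g \<noteq> 0" "ph g * y \<in> I0 \<alpha> p" using assms(2) by (auto simp: tor_def)
  have "ph (f * g) * (x + y) = ph g * (ph f * x) + ph f * (ph g * y)"
    by (simp add: ph_mult distrib_left mult.assoc[symmetric] ph_comm[of f g])
  also have "\<dots> \<in> I0 \<alpha> p" by (rule idc_add[OF I0_idc idc_lmul[OF I0_idc f(2)] idc_lmul[OF I0_idc g(2)]])
  finally have "ph (f * g) * (x + y) \<in> I0 \<alpha> p" .
  moreover have "f * g \<noteq> 0" using f g by simp
  ultimately show ?thesis unfolding tor_def by blast
qed

lemma tor_rmul: assumes "x \<in> tor \<alpha> p" shows "x * c \<in> tor \<alpha> p"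
proof -
  obtain f where f: "f \<noteq> 0" "ph f * x \<in> I0 \<alpha> p" using assms by (auto simp: tor_def)
  have "ph f * (x * c) \<in> I0 \<alpha> p" using idc_rmul[OF I0_idc f(2)] by (simp add: mult.assoc)
  then show ?thesis using f by (auto simp: tor_def)
qed

lemma tor_lmul_mn: assumes "x \<in> tor \<alpha> p" shows "mn w * x \<in> tor \<alpha> p"
proof -
  obtain f where f: "f \<noteq> 0" "ph f * x \<in> I0 \<alpha> p" using assms by (auto simp: tor_def)
  let ?g = "shift (ws \<alpha> w) f"
  have e: "ph ?g * (mn w * x) = mn w * (ph f * x) - (mn w * ph f - ph ?g * mn w) * x"
    by (simp add: algebra_simps)
  have "ph ?g * (mn w * x) \<in> I0 \<alpha> p" unfolding e
    by (rule idc_diff[OF I0_idc idc_lmul[OF I0_idc f(2)] idc_rmul[OF I0_idc mn_ph]])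
  then show ?thesis using shift_nz[OF f(1)] by (auto simp: tor_def)
qed

lemma tor_lmul_C: assumes "x \<in> tor \<alpha> p" shows "C c * x \<in> tor \<alpha> p"
proof -
  obtain f where f: "f \<noteq> 0" "ph f * x \<in> I0 \<alpha> p" using assms by (auto simp: tor_def)
  have "ph f * (C c * x) = C c * (ph f * x)" by (metis C_mult_comm mult.assoc)
  then have "ph f * (C c * x) \<in> I0 \<alpha> p" using idc_lmul[OF I0_idc f(2)] by simp
  then show ?thesis using f by (auto simp: tor_def)
qed

lemma tor_lmul: assumes "x \<in> tor \<alpha> p" shows "c * x \<in> tor \<alpha> p"
proof (induction c rule: pm_induct)
  case zero then show ?case using I0_tor[of \<alpha> p] idc_0[OF I0_idc[of \<alpha> p]] by (simp add: subset_iff)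
next
  case (single k d)
  have "sg k d * x = C d * (mn (unW k) * x)" by (simp add: sg_eq mult.assoc)
  then show ?case using tor_lmul_C[OF tor_lmul_mn[OF assms]] by simp
next
  case (add a b) then show ?case by (simp add: distrib_right tor_add)
qed

lemma tor_idc: "idc (tor \<alpha> p)"
  unfolding idc_def
proof (intro conjI ballI allI)
  show "0 \<in> tor \<alpha> p" using I0_tor[of \<alpha> p] idc_0[OF I0_idc[of \<alpha> p]] by blast
next
  fix a b assume "a \<in> tor \<alpha> p" "b \<in> tor \<alpha> p" then show "a + b \<in> tor \<alpha> p" by (rule tor_add)
next
  fix a assume "a \<in> tor \<alpha> p" then show "- a \<in> tor \<alpha> p" using tor_lmul[of a \<alpha> p "-1"] by simp
next
  fix a c assume "a \<in> tor \<alpha> p" then show "c * a \<in> tor \<alpha> p" by (rule tor_lmul)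
next
  fix a c assume "a \<in> tor \<alpha> p" then show "a * c \<in> tor \<alpha> p" by (rule tor_rmul)
qed


definition wdeg :: "wd \<Rightarrow> idx \<Rightarrow> int" where "wdeg k = word_deg (unW k)"

lemma word_deg_append: "word_deg (u @ v) = word_deg u + word_deg v"
  by (simp add: word_deg_def fun_eq_iff)
lemma word_deg_Nil: "word_deg [] = 0"
  by (simp add: word_deg_def fun_eq_iff)
lemma word_deg_Cons: "word_deg (g # v) = gen_deg g + word_deg v"
  by (simp add: word_deg_def fun_eq_iff)
lemma wdeg_add: "wdeg (k + l) = wdeg k + wdeg l" by (simp add: wdeg_def word_deg_append)
lemma wdeg_W: "wdeg (W w) = word_deg w" by (simp add: wdeg_def)

definition hc :: "(idx \<Rightarrow> int) \<Rightarrow> fa \<Rightarrow> fa" where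
  "hc d a = Abs_poly_mapping (\<lambda>k. if wdeg k = d then lk a k else 0)"

lemma lookup_hc: "lk (hc d a) k = (if wdeg k = d then lk a k else 0)"
proof -
  have "{k. (if wdeg k = d then lk a k else 0) \<noteq> 0} \<subseteq> {k. lk a k \<noteq> 0}" by auto
  then have "finite {k. (if wdeg k = d then lk a k else 0) \<noteq> 0}" by (rule finite_subset) simp
  then show ?thesis by (simp add: hc_def)
qed

lemma hc_add: "hc d (a + b) = hc d a + hc d b"
  by (rule poly_mapping_eqI) (simp add: lookup_hc Poly_Mapping.lookup_add)
lemma hc_uminus: "hc d (- a) = - hc d a"
  by (rule poly_mapping_eqI) (simp add: lookup_hc)
lemma hc_zero: "hc d 0 = 0"
  by (rule poly_mapping_eqI) (simp add: lookup_hc)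
lemma hc_single: "hc d (sg k c) = (if wdeg k = d then sg k c else 0)"
  by (rule poly_mapping_eqI) (auto simp: lookup_hc Poly_Mapping.lookup_single when_def)

lemma deg_eq: "(e + f = d) \<longleftrightarrow> (f = d - e)" for d e f :: "idx \<Rightarrow> int"
  by (auto simp: algebra_simps)
lemma deg_eq2: "(f + e = d) \<longleftrightarrow> (f = d - e)" for d e f :: "idx \<Rightarrow> int"
  by (auto simp: algebra_simps)

lemma hc_mult_left: "hc d (sg k c * b) = sg k c * hc (d - wdeg k) b"
proof (induction b rule: pm_induct)
  case zero then show ?case by (simp add: hc_zero)
next
  case (add a b) then show ?case by (simp add: distrib_left hc_add)
next
  case (single l e)
  have iff: "wdeg (k + l) = d \<longleftrightarrow> wdeg l = d - wdeg k" unfolding wdeg_add by (rule deg_eq)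
  show ?case
    by (cases "wdeg l = d - wdeg k") (simp_all only: Poly_Mapping.mult_single hc_single iff if_True if_False mult_zero_right simp_thms)
qed

lemma hc_mult_right: "hc d (b * sg k c) = hc (d - wdeg k) b * sg k c"
proof (induction b rule: pm_induct)
  case zero then show ?case by (simp add: hc_zero)
next
  case (add a b) then show ?case by (simp add: distrib_right hc_add)
next
  case (single l e)
  have iff: "wdeg (l + k) = d \<longleftrightarrow> wdeg l = d - wdeg k" unfolding wdeg_add by (rule deg_eq2)
  show ?case
    by (cases "wdeg l = d - wdeg k") (simp_all only: Poly_Mapping.mult_single hc_single iff if_True if_False mult_zero_left simp_thms)
qed

definition homog :: "(idx \<Rightarrow> int) \<Rightarrow> fa \<Rightarrow> bool" where
  "homog e a \<longleftrightarrow> (\<forall>k\<in>ks a. wdeg k = e)"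

lemma hc_homog: "homog e a \<Longrightarrow> hc d a = (if d = e then a else 0)"
  by (rule poly_mapping_eqI) (auto simp: lookup_hc homog_def in_keys_iff)

lemma homog_0: "homog e 0" by (simp add: homog_def)
lemma homog_add: "homog e a \<Longrightarrow> homog e b \<Longrightarrow> homog e (a + b)"
  using Poly_Mapping.keys_add[of a b] by (auto simp: homog_def)
lemma homog_uminus: "homog e a \<Longrightarrow> homog e (- a)"
  by (simp add: homog_def in_keys_iff)
lemma homog_diff: "homog e a \<Longrightarrow> homog e b \<Longrightarrow> homog e (a - b)"
  using homog_add[of e a "- b"] homog_uminus[of e b] by simp
lemma homog_mult: "homog e a \<Longrightarrow> homog f b \<Longrightarrow> homog (e + f) (a * b)"
  using Poly_Mapping.keys_mult[of a b] by (auto simp: homog_def wdeg_add)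
lemma homog_C: "homog 0 (C c)"
  by (simp add: homog_def C_def wdeg_def zero_wd_def word_deg_Nil)
lemma homog_mn: "homog (word_deg w) (mn w)"
  by (simp add: homog_def mn_def wdeg_def)
lemma homog_hH: "homog 0 hH"
  using homog_mn[of "[G0]"] by (simp add: hH_def word_deg_def zero_fun_def)
lemma homog_pow: "homog 0 a \<Longrightarrow> homog 0 (a ^ n)"
proof (induction n)
  case 0 show ?case using homog_C[of 1] unfolding C_1 power_0 .
next
  case (Suc n)
  then have "homog (0 + 0) (a * a ^ n)" by (intro homog_mult)
  then show ?case by (simp only: add_0_left power_Suc)
qed
lemma homog_sum: "(\<And>i. i \<in> S \<Longrightarrow> homog e (f i)) \<Longrightarrow> homog e (sum f S)"
proof (induction S rule: infinite_finite_induct)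
  case (insert x F) then show ?case by (simp add: homog_add)
qed (simp_all add: homog_0)
lemma homog_pe: "homog 0 a \<Longrightarrow> homog 0 (pe r a)"
  unfolding pe_def
  by (rule homog_sum) (use homog_mult[OF homog_C homog_pow] in simp)
lemma homog_ph: "homog 0 (ph r)"
  by (simp add: ph_def homog_pe homog_hH)
lemma homog_xP: "homog (word_deg [XP i]) (xP i)" by (simp add: xP_def homog_mn)
lemma homog_xM: "homog (word_deg [XM i]) (xM i)" by (simp add: xM_def homog_mn)

lemma homog_ex_trels: "x \<in> trels \<alpha> p \<Longrightarrow> \<exists>e. homog e x"
proof -
  have hp: "homog e (a * ph r)" if "homog e a" for e a r using homog_mult[OF that homog_ph] by simp
  have hp2: "homog e (ph r * a)" if "homog e a" for e a r using homog_mult[OF homog_ph that] by simp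
  have hxx: "homog (word_deg [a] + word_deg [b]) (mn [a] * mn [b])" for a b
    using homog_mult[OF homog_mn homog_mn] by simp
  have d0: "word_deg [XP i] + word_deg [XM i] = 0" "word_deg [XM i] + word_deg [XP i] = 0" for i
    by (simp_all add: word_deg_def fun_eq_iff)
  have hxx0: "homog 0 (mn [XP i] * mn [XM i])" "homog 0 (mn [XM i] * mn [XP i])" for i
    using hxx[of "XP i" "XM i"] hxx[of "XM i" "XP i"] unfolding d0 by blast+
  have c1: "\<exists>e. homog e (mn [a] * mn [b] - mn [b] * mn [a])" for a b
    using homog_diff[OF hxx[of a b], of "mn [b] * mn [a]"] hxx[of b a] by (metis add.commute)
  have c2: "\<exists>e. homog e (mn [a] * ph r - ph q * mn [a])" for a r q
    using homog_diff[OF hp[OF homog_mn] hp2[OF homog_mn]] by blast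
  have c3: "\<exists>e. homog e (mn [XP i] * mn [XM i] - ph q)" "\<exists>e. homog e (mn [XM i] * mn [XP i] - ph q)" for i q
    using homog_diff[OF hxx0(1) homog_ph] homog_diff[OF hxx0(2) homog_ph] by blast+
  assume "x \<in> trels \<alpha> p"
  then show ?thesis unfolding trels_def xP_def xM_def
    by (elim UnE UN_E insertE emptyE) (simp_all only: c1 c2 c3)
qed

definition grd :: "(idx \<Rightarrow> complex) \<Rightarrow> (idx \<Rightarrow> complex poly) \<Rightarrow> fa set" where
  "grd \<alpha> p = {x. \<forall>d. hc d x \<in> I0 \<alpha> p}"

lemma grd_idc: "idc (grd \<alpha> p)"
  unfolding idc_def
proof (intro conjI ballI allI)
  show "0 \<in> grd \<alpha> p" by (simp add: grd_def hc_zero idc_0[OF I0_idc])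
next
  fix a b assume "a \<in> grd \<alpha> p" "b \<in> grd \<alpha> p"
  then show "a + b \<in> grd \<alpha> p" by (simp add: grd_def hc_add idc_add[OF I0_idc])
next
  fix a assume "a \<in> grd \<alpha> p"
  then show "- a \<in> grd \<alpha> p" by (simp add: grd_def hc_uminus idc_neg[OF I0_idc])
next
  fix a c assume a: "a \<in> grd \<alpha> p"
  show "c * a \<in> grd \<alpha> p"
  proof (induction c rule: pm_induct)
    case zero then show ?case by (simp add: grd_def hc_zero idc_0[OF I0_idc])
  next
    case (add x y) then show ?case by (simp add: grd_def distrib_right hc_add idc_add[OF I0_idc])
  next
    case (single k e) then show ?case
      using a by (simp add: grd_def hc_mult_left idc_lmul[OF I0_idc])
  qed
  show "a * c \<in> grd \<alpha> p"
  proof (induction c rule: pm_induct)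
    case zero then show ?case by (simp add: grd_def hc_zero idc_0[OF I0_idc])
  next
    case (add x y) then show ?case by (simp add: grd_def distrib_left hc_add idc_add[OF I0_idc])
  next
    case (single k e) then show ?case
      using a by (simp add: grd_def hc_mult_right idc_rmul[OF I0_idc])
  qed
qed

lemma trels_grd: "trels \<alpha> p \<subseteq> grd \<alpha> p"
proof
  fix x assume x: "x \<in> trels \<alpha> p"
  then obtain e where "homog e x" using homog_ex_trels by blast
  then show "x \<in> grd \<alpha> p"
    using I0_rel[OF x] by (simp add: grd_def hc_homog idc_0[OF I0_idc])
qed

lemma I0_graded: "x \<in> I0 \<alpha> p \<Longrightarrow> hc d x \<in> I0 \<alpha> p"
  using gid_min[OF grd_idc trels_grd] by (auto simp: grd_def)

lemma hc_decomp: "x = (\<Sum>d\<in>wdeg ` ks x. hc d x)"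
proof (rule poly_mapping_eqI)
  fix k
  have "lk (\<Sum>d\<in>wdeg ` ks x. hc d x) k = (\<Sum>d\<in>wdeg ` ks x. if wdeg k = d then lk x k else 0)"
    by (simp add: Poly_Mapping.lookup_sum lookup_hc)
  also have "\<dots> = (if wdeg k \<in> wdeg ` ks x then lk x k else 0)"
    by (simp add: sum.delta)
  also have "\<dots> = lk x k" by (auto simp: in_keys_iff)
  finally show "lk x k = lk (\<Sum>d\<in>wdeg ` ks x. hc d x) k" by simp
qed

lemma homog_hc: "homog d (hc d x)"
  unfolding homog_def
proof
  fix k assume "k \<in> ks (hc d x)"
  then have "lk (hc d x) k \<noteq> 0" by (simp add: in_keys_iff)
  then show "wdeg k = d" by (simp add: lookup_hc split: if_splits)
qed

lemma rep_hc: "hom_comp d (rep a) = rep (hc d a)"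
  by (simp add: hom_comp_def rep_def lookup_hc wdeg_W)


type_synonym vv = "int \<Rightarrow> int \<Rightarrow> complex poly"

definition nal :: "(idx \<Rightarrow> complex) \<Rightarrow> int \<Rightarrow> int \<Rightarrow> complex" where
  "nal \<alpha> a b = of_int a * \<alpha> I1 + of_int b * \<alpha> I2"

definition PP :: "(idx \<Rightarrow> complex) \<Rightarrow> (idx \<Rightarrow> complex poly) \<Rightarrow> idx \<Rightarrow> int \<Rightarrow> int \<Rightarrow> complex poly" where
  "PP \<alpha> p i a b = shift (nal \<alpha> a b + \<alpha> i / 2) (p i)"

fun gact :: "(idx \<Rightarrow> complex) \<Rightarrow> (idx \<Rightarrow> complex poly) \<Rightarrow> gen \<Rightarrow> vv \<Rightarrow> vv" where
  "gact \<alpha> p G0 v = (\<lambda>a b. [:nal \<alpha> a b, 1:] * v a b)"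
| "gact \<alpha> p (XP I1) v = (\<lambda>a b. v (a - 1) b)"
| "gact \<alpha> p (XM I1) v = (\<lambda>a b. PP \<alpha> p I1 a b * v (a + 1) b)"
| "gact \<alpha> p (XP I2) v = (\<lambda>a b. PP \<alpha> p I2 a (b - 1) * v a (b - 1))"
| "gact \<alpha> p (XM I2) v = (\<lambda>a b. v a (b + 1))"

fun wact :: "(idx \<Rightarrow> complex) \<Rightarrow> (idx \<Rightarrow> complex poly) \<Rightarrow> gen list \<Rightarrow> vv \<Rightarrow> vv" where
  "wact \<alpha> p [] v = v"
| "wact \<alpha> p (g # w) v = gact \<alpha> p g (wact \<alpha> p w v)"

definition vadd :: "vv \<Rightarrow> vv \<Rightarrow> vv" where "vadd v w = (\<lambda>a b. v a b + w a b)"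
definition vsm :: "complex \<Rightarrow> vv \<Rightarrow> vv" where "vsm c v = (\<lambda>a b. smult c (v a b))"
definition vz :: vv where "vz = (\<lambda>a b. 0)"

lemma gact_add: "gact \<alpha> p g (vadd v w) = vadd (gact \<alpha> p g v) (gact \<alpha> p g w)"
proof (cases g)
  case G0 then show ?thesis by (simp add: vadd_def fun_eq_iff distrib_left)
next
  case (XP i) then show ?thesis by (cases i) (simp_all add: vadd_def fun_eq_iff distrib_left)
next
  case (XM i) then show ?thesis by (cases i) (simp_all add: vadd_def fun_eq_iff distrib_left)
qed
lemma gact_sm: "gact \<alpha> p g (vsm c v) = vsm c (gact \<alpha> p g v)"
proof (cases g)
  case G0 then show ?thesis by (simp add: vsm_def fun_eq_iff)
next
  case (XP i) then show ?thesis by (cases i) (simp_all add: vsm_def fun_eq_iff)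
next
  case (XM i) then show ?thesis by (cases i) (simp_all add: vsm_def fun_eq_iff)
qed
lemma gact_z: "gact \<alpha> p g vz = vz"
proof (cases g)
  case G0 then show ?thesis by (simp add: vz_def fun_eq_iff)
next
  case (XP i) then show ?thesis by (cases i) (simp_all add: vz_def fun_eq_iff)
next
  case (XM i) then show ?thesis by (cases i) (simp_all add: vz_def fun_eq_iff)
qed

lemma wact_add: "wact \<alpha> p w (vadd v u) = vadd (wact \<alpha> p w v) (wact \<alpha> p w u)"
  by (induction w) (simp_all add: gact_add)
lemma wact_sm: "wact \<alpha> p w (vsm c v) = vsm c (wact \<alpha> p w v)"
  by (induction w) (simp_all add: gact_sm)
lemma wact_z: "wact \<alpha> p w vz = vz"
  by (induction w) (simp_all add: gact_z)
lemma wact_append: "wact \<alpha> p (u @ w) v = wact \<alpha> p u (wact \<alpha> p w v)"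
  by (induction u) simp_all

definition act :: "(idx \<Rightarrow> complex) \<Rightarrow> (idx \<Rightarrow> complex poly) \<Rightarrow> fa \<Rightarrow> vv \<Rightarrow> vv" where
  "act \<alpha> p x v = (\<lambda>a b. \<Sum>k\<in>ks x. smult (lk x k) (wact \<alpha> p (unW k) v a b))"

lemma act_plus: "act \<alpha> p (x + y) v = vadd (act \<alpha> p x v) (act \<alpha> p y v)"
  unfolding act_def vadd_def
  by (intro ext, rule setsum_keys_plus_distrib) (simp_all add: smult_add_left)

lemma act_zero: "act \<alpha> p 0 v = vz" by (simp add: act_def vz_def)

lemma act_single: "act \<alpha> p (sg k c) v = vsm c (wact \<alpha> p (unW k) v)"
  by (cases "c = 0") (simp_all add: act_def vsm_def fun_eq_iff Poly_Mapping.lookup_single)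

lemma act_vadd: "act \<alpha> p x (vadd v w) = vadd (act \<alpha> p x v) (act \<alpha> p x w)"
  unfolding act_def by (simp only: wact_add) (simp add: vadd_def sum.distrib smult_add_right)

lemma smult_sum_r: "smult c (sum f S) = (\<Sum>i\<in>S. smult c (f i))"
  by (induction S rule: infinite_finite_induct) (simp_all add: smult_add_right)

lemma act_vsm: "act \<alpha> p x (vsm c v) = vsm c (act \<alpha> p x v)"
  unfolding act_def by (simp only: wact_sm) (simp add: vsm_def smult_sum_r mult.commute)

lemma act_vz: "act \<alpha> p x vz = vz"
  unfolding act_def by (simp only: wact_z) (simp add: vz_def)

lemma vadd_vz: "vadd vz vz = vz" by (simp add: vadd_def vz_def)
lemma vsm_vz: "vsm c vz = vz" by (simp add: vsm_def vz_def)

lemma act_mult: "act \<alpha> p (x * y) v = act \<alpha> p x (act \<alpha> p y v)"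
proof (induction x arbitrary: v rule: pm_induct)
  case zero then show ?case by (simp add: act_zero)
next
  case (add x1 x2) then show ?case by (simp add: distrib_right act_plus)
next
  case (single k c)
  show ?case
  proof (induction y arbitrary: v rule: pm_induct)
    case zero then show ?case by (simp add: act_zero act_vz)
  next
    case (add y1 y2) then show ?case by (simp add: distrib_left act_plus act_vadd)
  next
    case (single l d)
    show ?case by (simp only: Poly_Mapping.mult_single act_single unW_add wact_append wact_sm) (simp add: vsm_def)
  qed
qed

lemma act_mn: "act \<alpha> p (mn w) v = wact \<alpha> p w v"
  by (simp add: mn_def act_single vsm_def)

lemma act_C: "act \<alpha> p (C c) v = vsm c v"
  by (simp add: C_def act_single zero_wd_def)

lemma act_minus: "act \<alpha> p (x - y) v = (\<lambda>a b. act \<alpha> p x v a b - act \<alpha> p y v a b)"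
proof -
  have e: "x - y = x + C (-1) * y" by (simp add: C_uminus)
  show ?thesis unfolding e by (simp only: act_plus act_mult act_C) (simp add: vadd_def vsm_def)
qed

lemma act_ph: "act \<alpha> p (ph r) v = (\<lambda>a b. shift (nal \<alpha> a b) r * v a b)"
proof (induction r arbitrary: v)
  case 0 then show ?case by (simp add: ph_def act_zero vz_def shift_def)
next
  case (pCons c r)
  have "ph (pCons c r) = C c + hH * ph r" by (simp add: ph_def pe_pCons)
  then show ?case using pCons.IH
    by (simp add: act_plus act_mult act_C hH_def act_mn vadd_def vsm_def fun_eq_iff shift_def
        pcompose_pCons algebra_simps)
qed

definition Kr :: "(idx \<Rightarrow> complex) \<Rightarrow> (idx \<Rightarrow> complex poly) \<Rightarrow> fa set" where
  "Kr \<alpha> p = {x. \<forall>v. act \<alpha> p x v = vz}"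

lemma Kr_idc: "idc (Kr \<alpha> p)"
  unfolding idc_def Kr_def
proof (intro conjI ballI allI; clarsimp)
  show "act \<alpha> p 0 v = vz" for v by (rule act_zero)
next
  fix x y v assume "\<forall>v. act \<alpha> p x v = vz" "\<forall>v. act \<alpha> p y v = vz"
  then show "act \<alpha> p (x + y) v = vz" by (simp add: act_plus vadd_vz)
next
  fix x v assume "\<forall>v. act \<alpha> p x v = vz"
  then show "act \<alpha> p (- x) v = vz" using act_minus[of \<alpha> p 0 x v] by (simp add: act_zero vz_def)
next
  fix x c v assume "\<forall>v. act \<alpha> p x v = vz"
  then show "act \<alpha> p (c * x) v = vz" "act \<alpha> p (x * c) v = vz" by (simp_all add: act_mult act_vz)
qed

lemma act_one: "act \<alpha> p 1 v = v" using act_mn[of \<alpha> p "[]" v] by simp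

lemma act_xP1: "act \<alpha> p (xP I1 * y) v a b = act \<alpha> p y v (a - 1) b"
  by (simp add: act_mult xP_def act_mn)
lemma act_xM1: "act \<alpha> p (xM I1 * y) v a b = PP \<alpha> p I1 a b * act \<alpha> p y v (a + 1) b"
  by (simp add: act_mult xM_def act_mn)
lemma act_xP2: "act \<alpha> p (xP I2 * y) v a b = PP \<alpha> p I2 a (b - 1) * act \<alpha> p y v a (b - 1)"
  by (simp add: act_mult xP_def act_mn)
lemma act_xM2: "act \<alpha> p (xM I2 * y) v a b = act \<alpha> p y v a (b + 1)"
  by (simp add: act_mult xM_def act_mn)
lemma act_phm: "act \<alpha> p (ph r * y) v a b = shift (nal \<alpha> a b) r * act \<alpha> p y v a b"
  by (simp add: act_mult act_ph)
lemma act_xP1': "act \<alpha> p (xP I1) v a b = v (a - 1) b" using act_xP1[of \<alpha> p 1] by (simp add: act_one)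
lemma act_xM1': "act \<alpha> p (xM I1) v a b = PP \<alpha> p I1 a b * v (a + 1) b" using act_xM1[of \<alpha> p 1] by (simp add: act_one)
lemma act_xP2': "act \<alpha> p (xP I2) v a b = PP \<alpha> p I2 a (b - 1) * v a (b - 1)" using act_xP2[of \<alpha> p 1] by (simp add: act_one)
lemma act_xM2': "act \<alpha> p (xM I2) v a b = v a (b + 1)" using act_xM2[of \<alpha> p 1] by (simp add: act_one)

lemmas act_simps = act_xP1 act_xM1 act_xP2 act_xM2 act_phm act_xP1' act_xM1' act_xP2' act_xM2' act_ph

lemma n1m: "nal \<alpha> (a - 1) b = nal \<alpha> a b + - \<alpha> I1" by (simp add: nal_def algebra_simps)
lemma n1p: "nal \<alpha> (a + 1) b = nal \<alpha> a b + \<alpha> I1" by (simp add: nal_def algebra_simps)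
lemma n2m: "nal \<alpha> a (b - 1) = nal \<alpha> a b + - \<alpha> I2" by (simp add: nal_def algebra_simps)
lemma n2p: "nal \<alpha> a (b + 1) = nal \<alpha> a b + \<alpha> I2" by (simp add: nal_def algebra_simps)

lemma PP1m: "PP \<alpha> p I1 (a - 1) b = shift (nal \<alpha> a b + - \<alpha> I1 / 2) (p I1)"
  by (simp add: PP_def n1m field_simps)
lemma PP2m: "PP \<alpha> p I2 a (b - 1) = shift (nal \<alpha> a b + - \<alpha> I2 / 2) (p I2)"
  by (simp add: PP_def n2m field_simps)

lemma rel_Kr: assumes "\<And>v a b. act \<alpha> p x v a b = act \<alpha> p y v a b" shows "x - y \<in> Kr \<alpha> p"
  using assms by (simp add: Kr_def act_minus vz_def fun_eq_iff)

lemma trels_Kr: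
  assumes hyp: "shift (\<alpha> I2 / 2) (p I1) * shift (\<alpha> I1 / 2) (p I2)
         = shift (- \<alpha> I2 / 2) (p I1) * shift (- \<alpha> I1 / 2) (p I2)"
  shows "trels \<alpha> p \<subseteq> Kr \<alpha> p"
proof -
  have T1: "xP i * ph r - ph (shift (- \<alpha> i) r) * xP i \<in> Kr \<alpha> p" for i r
  proof (cases i)
    case I1 then show ?thesis by (intro rel_Kr) (simp add: act_simps n1m shift_shift)
  next
    case I2 then show ?thesis by (intro rel_Kr) (simp add: act_simps n2m shift_shift mult_ac)
  qed
  have T2: "xM i * ph r - ph (shift (\<alpha> i) r) * xM i \<in> Kr \<alpha> p" for i r
  proof (cases i)
    case I1 then show ?thesis by (intro rel_Kr) (simp add: act_simps n1p shift_shift mult_ac)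
  next
    case I2 then show ?thesis by (intro rel_Kr) (simp add: act_simps n2p shift_shift)
  qed
  have T3: "xP i * xM i - ph (shift (- \<alpha> i / 2) (p i)) \<in> Kr \<alpha> p" for i
  proof (cases i)
    case I1 then show ?thesis by (intro rel_Kr) (simp add: act_simps PP1m shift_shift)
  next
    case I2 then show ?thesis by (intro rel_Kr) (simp add: act_simps PP2m shift_shift)
  qed
  have T4: "xM i * xP i - ph (shift (\<alpha> i / 2) (p i)) \<in> Kr \<alpha> p" for i
  proof (cases i)
    case I1 then show ?thesis by (intro rel_Kr) (simp add: act_simps PP_def shift_shift)
  next
    case I2 then show ?thesis by (intro rel_Kr) (simp add: act_simps PP_def shift_shift)
  qed
  have X1: "act \<alpha> p (xP I1 * xM I2) v a b = act \<alpha> p (xM I2 * xP I1) v a b" for v a b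
    by (simp add: act_simps)
  have X2: "act \<alpha> p (xM I1 * xP I2) v a b = act \<alpha> p (xP I2 * xM I1) v a b" for v a b
  proof -
    define w where "w = nal \<alpha> a b + \<alpha> I1 / 2 - \<alpha> I2 / 2"
    have "shift w (shift (\<alpha> I2 / 2) (p I1) * shift (\<alpha> I1 / 2) (p I2))
        = shift w (shift (- \<alpha> I2 / 2) (p I1) * shift (- \<alpha> I1 / 2) (p I2))" by (simp only: hyp)
    then have H: "shift (w + \<alpha> I2 / 2) (p I1) * shift (w + \<alpha> I1 / 2) (p I2)
       = shift (w + - \<alpha> I2 / 2) (p I1) * shift (w + - \<alpha> I1 / 2) (p I2)"
      by (simp only: shift_mult shift_shift)
    have e1: "PP \<alpha> p I1 a b = shift (w + \<alpha> I2 / 2) (p I1)" by (simp add: PP_def w_def)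
    have e2: "PP \<alpha> p I2 (a + 1) (b - 1) = shift (w + \<alpha> I1 / 2) (p I2)"
      by (simp add: PP_def w_def nal_def algebra_simps)
    have e3: "PP \<alpha> p I1 a (b - 1) = shift (w + - \<alpha> I2 / 2) (p I1)"
      by (simp add: PP_def w_def nal_def algebra_simps)
    have e4: "PP \<alpha> p I2 a (b - 1) = shift (w + - \<alpha> I1 / 2) (p I2)"
      by (simp add: PP_def w_def nal_def algebra_simps)
    have "act \<alpha> p (xM I1 * xP I2) v a b = PP \<alpha> p I1 a b * PP \<alpha> p I2 (a + 1) (b - 1) * v (a + 1) (b - 1)"
      by (simp add: act_simps)
    also have "\<dots> = PP \<alpha> p I1 a (b - 1) * PP \<alpha> p I2 a (b - 1) * v (a + 1) (b - 1)"
      unfolding e1 e2 e3 e4 H ..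
    also have "\<dots> = act \<alpha> p (xP I2 * xM I1) v a b"
      by (simp add: act_simps)
    finally show ?thesis .
  qed
  show ?thesis
  proof
    fix x assume "x \<in> trels \<alpha> p"
    then consider (a) i r where "x = xP i * ph r - ph (shift (- \<alpha> i) r) * xP i"
      | (b) i r where "x = xM i * ph r - ph (shift (\<alpha> i) r) * xM i"
      | (c) i where "x = xP i * xM i - ph (shift (- \<alpha> i / 2) (p i))"
      | (d) i where "x = xM i * xP i - ph (shift (\<alpha> i / 2) (p i))"
      | (e) "x = xP I1 * xM I2 - xM I2 * xP I1" | (f) "x = xM I1 * xP I2 - xP I2 * xM I1"
      | (g) "x = xP I2 * xM I1 - xM I1 * xP I2" | (h) "x = xM I2 * xP I1 - xP I1 * xM I2"
      unfolding trels_def by blast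
    then show "x \<in> Kr \<alpha> p"
    proof cases
      case a then show ?thesis using T1 by simp
    next
      case b then show ?thesis using T2 by simp
    next
      case c then show ?thesis using T3 by simp
    next
      case d then show ?thesis using T4 by simp
    next
      case e then show ?thesis using rel_Kr X1 by simp
    next
      case f then show ?thesis using rel_Kr X2 by simp
    next
      case g then show ?thesis using rel_Kr X2 by simp
    next
      case h then show ?thesis using rel_Kr X1 by simp
    qed
  qed
qed

lemma ph_I0_zero:
  assumes hyp: "shift (\<alpha> I2 / 2) (p I1) * shift (\<alpha> I1 / 2) (p I2)
         = shift (- \<alpha> I2 / 2) (p I1) * shift (- \<alpha> I1 / 2) (p I2)"
    and r: "ph r \<in> I0 \<alpha> p"
  shows "r = 0"
proof -
  have "ph r \<in> Kr \<alpha> p" using gid_min[OF Kr_idc trels_Kr[OF hyp]] r by blast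
  then have "act \<alpha> p (ph r) (\<lambda>a b. if a = 0 \<and> b = 0 then 1 else 0) 0 0 = 0"
    by (simp add: Kr_def vz_def)
  then show ?thesis by (simp add: act_ph nal_def shift_0)
qed


lemma I0_pair1: "mn [XP i] * mn [XM i] - ph (shift (- \<alpha> i / 2) (p i)) \<in> I0 \<alpha> p"
  by (intro I0_rel) (auto simp: trels_def xP_def xM_def)
lemma I0_pair2: "mn [XM i] * mn [XP i] - ph (shift (\<alpha> i / 2) (p i)) \<in> I0 \<alpha> p"
  by (intro I0_rel) (auto simp: trels_def xP_def xM_def)
lemma I0_cross1: "mn [XP I1] * mn [XM I2] - mn [XM I2] * mn [XP I1] \<in> I0 \<alpha> p"
  by (intro I0_rel) (auto simp: trels_def xP_def xM_def)
lemma I0_cross2: "mn [XM I1] * mn [XP I2] - mn [XP I2] * mn [XM I1] \<in> I0 \<alpha> p"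
  by (intro I0_rel) (auto simp: trels_def xP_def xM_def)

lemma I0_sym: "x - y \<in> I0 \<alpha> p \<Longrightarrow> y - x \<in> I0 \<alpha> p"
  using idc_neg[OF I0_idc, of "x - y"] by simp
lemma I0_trans: "x - y \<in> I0 \<alpha> p \<Longrightarrow> y - z \<in> I0 \<alpha> p \<Longrightarrow> x - z \<in> I0 \<alpha> p"
  using idc_add[OF I0_idc, of "x - y" \<alpha> p "y - z"] by simp
lemma I0_cong: "x - y \<in> I0 \<alpha> p \<Longrightarrow> a * x * b - a * y * b \<in> I0 \<alpha> p"
proof -
  assume "x - y \<in> I0 \<alpha> p"
  then have "a * (x - y) * b \<in> I0 \<alpha> p" using idc_lmul[OF I0_idc] idc_rmul[OF I0_idc] by blast
  then show ?thesis by (simp add: algebra_simps)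
qed

lemma comm_pow: assumes "x * y - y * x \<in> I0 \<alpha> p" shows "x * y ^ k - y ^ k * x \<in> I0 \<alpha> p"
proof (induction k)
  case 0 then show ?case by (simp add: idc_0[OF I0_idc])
next
  case (Suc k)
  have e: "x * y ^ Suc k - y ^ Suc k * x = (x * y - y * x) * y ^ k + y * (x * y ^ k - y ^ k * x)"
    by (simp add: algebra_simps power_commutes)
  show ?case unfolding e
    by (rule idc_add[OF I0_idc idc_rmul[OF I0_idc assms] idc_lmul[OF I0_idc Suc.IH]])
qed

lemma mn_rep: "mn (replicate k z) = mn [z] ^ k"
proof (induction k)
  case (Suc k)
  have "mn (z # replicate k z) = mn [z] * mn (replicate k z)" by (rule mon_Cons)
  then show ?case using Suc by simp
qed simp

definition oppair :: "gen \<Rightarrow> gen \<Rightarrow> bool" where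
  "oppair a b \<longleftrightarrow> (\<exists>i. (a = XP i \<and> b = XM i) \<or> (a = XM i \<and> b = XP i))"

definition cpat :: "gen \<Rightarrow> gen \<Rightarrow> gen \<Rightarrow> bool" where
  "cpat x z y \<longleftrightarrow> (x = XP I1 \<and> y = XM I1 \<and> (z = XM I2 \<or> z = XP I2))
                  \<or> (x = XM I1 \<and> y = XP I1 \<and> (z = XP I2 \<or> z = XM I2))"

definition hasP :: "gen list \<Rightarrow> bool" where
  "hasP w \<longleftrightarrow> (\<exists>w1 w2 a b. w = w1 @ [a, b] @ w2 \<and> oppair a b)"
definition hasC :: "gen list \<Rightarrow> bool" where
  "hasC w \<longleftrightarrow> (\<exists>w1 w2 x k z y. w = w1 @ [x] @ replicate k z @ [y] @ w2 \<and> cpat x z y)"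

lemma hasP_Cons: "hasP w \<Longrightarrow> hasP (a # w)"
  unfolding hasP_def by (metis append_Cons)
lemma hasC_Cons: "hasC w \<Longrightarrow> hasC (a # w)"
  unfolding hasC_def by (metis append_Cons)

lemma gen_cases4: "g \<noteq> G0 \<Longrightarrow> g = XP I1 \<or> g = XM I1 \<or> g = XP I2 \<or> g = XM I2"
proof (cases g)
  case (XP i) then show ?thesis by (cases i) auto
next
  case (XM i) then show ?thesis by (cases i) auto
qed auto

lemma gen_cases4': "(g = G0 \<Longrightarrow> P) \<Longrightarrow> (g = XP I1 \<Longrightarrow> P) \<Longrightarrow> (g = XM I1 \<Longrightarrow> P) \<Longrightarrow> (g = XP I2 \<Longrightarrow> P) \<Longrightarrow> (g = XM I2 \<Longrightarrow> P) \<Longrightarrow> P"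
  by (metis gen_cases4)

lemma rep_const:
  assumes "\<forall>c\<in>set B. c = XP I2 \<or> c = XM I2" "\<not> hasP B"
  shows "\<exists>z k. (z = XP I2 \<or> z = XM I2) \<and> B = replicate k z"
  using assms
proof (induction B)
  case Nil then show ?case by (intro exI[of _ "XM I2"] exI[of _ 0]) simp
next
  case (Cons c B)
  have nB: "\<not> hasP B" using Cons.prems(2) hasP_Cons by blast
  obtain z k where zk: "z = XP I2 \<or> z = XM I2" "B = replicate k z" using Cons.IH Cons.prems(1) nB by auto
  show ?case
  proof (cases k)
    case 0 then show ?thesis using zk Cons.prems(1) by (intro exI[of _ c] exI[of _ 1]) auto
  next
    case (Suc k')
    have "c = z"
    proof (rule ccontr)
      assume "c \<noteq> z"
      then have "oppair c z" using zk(1) Cons.prems(1) by (auto simp: oppair_def)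
      moreover have "c # B = [] @ [c, z] @ replicate k' z" using zk Suc by simp
      ultimately show False using Cons.prems(2) unfolding hasP_def by blast
    qed
    then show ?thesis using zk by (intro exI[of _ z] exI[of _ "Suc k"]) auto
  qed
qed

lemma noPat_inv:
  assumes "G0 \<notin> set w" "\<not> hasP w" "\<not> hasC w"
  shows "(XP I1 \<notin> set w \<or> XM I1 \<notin> set w) \<and>
         ((XP I1 \<notin> set w \<and> XM I1 \<notin> set w) \<longrightarrow> (XP I2 \<notin> set w \<or> XM I2 \<notin> set w))"
  using assms
proof (induction w)
  case Nil then show ?case by simp
next
  case (Cons a w)
  have IH: "(XP I1 \<notin> set w \<or> XM I1 \<notin> set w) \<and>
         ((XP I1 \<notin> set w \<and> XM I1 \<notin> set w) \<longrightarrow> (XP I2 \<notin> set w \<or> XM I2 \<notin> set w))"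
  proof -
    have "\<not> hasP w" using Cons.prems(2) hasP_Cons by blast
    moreover have "\<not> hasC w" using Cons.prems(3) hasC_Cons by blast
    moreover have "G0 \<notin> set w" using Cons.prems(1) by simp
    ultimately show ?thesis using Cons.IH by blast
  qed
  have nG: "G0 \<notin> set w" "a \<noteq> G0" using Cons.prems(1) by (simp, metis list.set_intros(1))
  have allg: "c = XP I1 \<or> c = XM I1 \<or> c = XP I2 \<or> c = XM I2" if "c \<in> set w" for c
  proof -
    have "c \<noteq> G0" using that nG(1) by auto
    then show ?thesis by (rule gen_cases4)
  qed
  have X1case: "XM I1 \<notin> set w" if a1: "a = XP I1"
  proof
    assume m: "XM I1 \<in> set w"
    obtain B y rest where s: "w = B @ y # rest" "y = XP I1 \<or> y = XM I1"
        "\<forall>c\<in>set B. \<not> (c = XP I1 \<or> c = XM I1)"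
      using split_list_first_prop[of w "\<lambda>c. c = XP I1 \<or> c = XM I1"] m by blast
    have y: "y = XM I1"
    proof (rule ccontr)
      assume "y \<noteq> XM I1"
      then have "XP I1 \<in> set w" using s by auto
      then show False using IH m by blast
    qed
    have B2: "\<forall>c\<in>set B. c = XP I2 \<or> c = XM I2" using s allg by auto
    have nPB: "\<not> hasP B"
    proof
      assume "hasP B"
      then obtain u1 u2 c d where "B = u1 @ [c, d] @ u2" "oppair c d" unfolding hasP_def by blast
      then have "a # w = (a # u1) @ [c, d] @ (u2 @ y # rest)" using s by simp
      then show False using Cons.prems(2) \<open>oppair c d\<close> unfolding hasP_def by blast
    qed
    obtain z k where zk: "z = XP I2 \<or> z = XM I2" "B = replicate k z" using rep_const[OF B2 nPB] by blast
    have "a # w = [] @ [a] @ replicate k z @ [y] @ rest" using s zk by simp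
    moreover have "cpat a z y" using a1 y zk by (auto simp: cpat_def)
    ultimately show False using Cons.prems(3) unfolding hasC_def by blast
  qed
  have X1case': "XP I1 \<notin> set w" if a1: "a = XM I1"
  proof
    assume m: "XP I1 \<in> set w"
    obtain B y rest where s: "w = B @ y # rest" "y = XP I1 \<or> y = XM I1"
        "\<forall>c\<in>set B. \<not> (c = XP I1 \<or> c = XM I1)"
      using split_list_first_prop[of w "\<lambda>c. c = XP I1 \<or> c = XM I1"] m by blast
    have y: "y = XP I1"
    proof (rule ccontr)
      assume "y \<noteq> XP I1"
      then have "XM I1 \<in> set w" using s by auto
      then show False using IH m by blast
    qed
    have B2: "\<forall>c\<in>set B. c = XP I2 \<or> c = XM I2" using s allg by auto
    have nPB: "\<not> hasP B"
    proof
      assume "hasP B"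
      then obtain u1 u2 c d where "B = u1 @ [c, d] @ u2" "oppair c d" unfolding hasP_def by blast
      then have "a # w = (a # u1) @ [c, d] @ (u2 @ y # rest)" using s by simp
      then show False using Cons.prems(2) \<open>oppair c d\<close> unfolding hasP_def by blast
    qed
    obtain z k where zk: "z = XP I2 \<or> z = XM I2" "B = replicate k z" using rep_const[OF B2 nPB] by blast
    have "a # w = [] @ [a] @ replicate k z @ [y] @ rest" using s zk by simp
    moreover have "cpat a z y" using a1 y zk by (auto simp: cpat_def)
    ultimately show False using Cons.prems(3) unfolding hasC_def by blast
  qed
  have X2case: "\<not> (XM I2 \<in> set w)" if a2: "a = XP I2" "XP I1 \<notin> set w" "XM I1 \<notin> set w"
  proof
    assume m: "XM I2 \<in> set w"
    then have np: "XP I2 \<notin> set w" using IH a2 by blast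
    obtain c w' where w: "w = c # w'" using m by (cases w) auto
    have "c = XM I2" using allg[of c] w a2 np by auto
    then have "a # w = [] @ [a, c] @ w'" "oppair a c" using w a2 by (auto simp: oppair_def)
    then show False using Cons.prems(2) unfolding hasP_def by blast
  qed
  have X2case': "\<not> (XP I2 \<in> set w)" if a2: "a = XM I2" "XP I1 \<notin> set w" "XM I1 \<notin> set w"
  proof
    assume m: "XP I2 \<in> set w"
    then have np: "XM I2 \<notin> set w" using IH a2 by blast
    obtain c w' where w: "w = c # w'" using m by (cases w) auto
    have "c = XP I2" using allg[of c] w a2 np by auto
    then have "a # w = [] @ [a, c] @ w'" "oppair a c" using w a2 by (auto simp: oppair_def)
    then show False using Cons.prems(2) unfolding hasP_def by blast
  qed
  show ?case
    using gen_cases4[OF nG(2)] IH X1case X1case' X2case X2case' by auto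
qed

lemma gd_nonneg: "a \<noteq> XM j \<Longrightarrow> 0 \<le> gen_deg a j" by (cases a) auto
lemma gd_nonpos: "a \<noteq> XP j \<Longrightarrow> gen_deg a j \<le> 0" by (cases a) auto

lemma wdeg_pos: "XM j \<notin> set w \<Longrightarrow> 0 \<le> word_deg w j"
proof (induction w)
  case Nil then show ?case by (simp add: word_deg_Nil)
next
  case (Cons a w)
  have "0 \<le> gen_deg a j" using Cons.prems by (intro gd_nonneg) auto
  then show ?case using Cons by (simp add: word_deg_Cons)
qed
lemma wdeg_pos2: "XM j \<notin> set w \<Longrightarrow> XP j \<in> set w \<Longrightarrow> 0 < word_deg w j"
proof (induction w)
  case (Cons a w)
  have "0 \<le> gen_deg a j" using Cons.prems(1) by (intro gd_nonneg) auto
  moreover have "0 \<le> word_deg w j" using Cons.prems(1) wdeg_pos by simp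
  ultimately show ?case using Cons by (cases "a = XP j") (auto simp: word_deg_Cons)
qed simp
lemma wdeg_neg: "XP j \<notin> set w \<Longrightarrow> word_deg w j \<le> 0"
proof (induction w)
  case Nil then show ?case by (simp add: word_deg_Nil)
next
  case (Cons a w)
  have "gen_deg a j \<le> 0" using Cons.prems by (intro gd_nonpos) auto
  then show ?case using Cons by (simp add: word_deg_Cons)
qed
lemma wdeg_neg2: "XP j \<notin> set w \<Longrightarrow> XM j \<in> set w \<Longrightarrow> word_deg w j < 0"
proof (induction w)
  case (Cons a w)
  have "gen_deg a j \<le> 0" using Cons.prems(1) by (intro gd_nonpos) auto
  moreover have "word_deg w j \<le> 0" using Cons.prems(1) wdeg_neg by simp
  ultimately show ?case using Cons by (cases "a = XM j") (auto simp: word_deg_Cons)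
qed simp

lemma pattern_exists:
  assumes "G0 \<notin> set w" "word_deg w = 0" "w \<noteq> []"
  shows "hasP w \<or> hasC w"
proof (rule ccontr)
  assume "\<not> (hasP w \<or> hasC w)"
  then have inv: "(XP I1 \<notin> set w \<or> XM I1 \<notin> set w) \<and>
         ((XP I1 \<notin> set w \<and> XM I1 \<notin> set w) \<longrightarrow> (XP I2 \<notin> set w \<or> XM I2 \<notin> set w))"
    using noPat_inv assms(1) by blast
  have d: "word_deg w j = 0" for j using assms(2) by simp
  obtain c where c: "c \<in> set w" using assms(3) by (cases w) auto
  have "c \<noteq> G0" using c assms(1) by auto
  then have "c = XP I1 \<or> c = XM I1 \<or> c = XP I2 \<or> c = XM I2" by (rule gen_cases4)
  then show False
    using inv c d[of I1] d[of I2] wdeg_pos2[of I1 w] wdeg_neg2[of I1 w] wdeg_pos2[of I2 w] wdeg_neg2[of I2 w]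
    by auto
qed


lemma move_mid: "mn u1 * ph q * mn u2 - ph (shift (ws \<alpha> u1) q) * mn (u1 @ u2) \<in> I0 \<alpha> p"
proof -
  have "(mn u1 * ph q - ph (shift (ws \<alpha> u1) q) * mn u1) * mn u2 \<in> I0 \<alpha> p"
    by (rule idc_rmul[OF I0_idc mn_ph])
  then show ?thesis by (simp add: algebra_simps mon_append)
qed

lemma pair_q: "oppair a b \<Longrightarrow> \<exists>q. mn [a, b] - ph q \<in> I0 \<alpha> p"
proof -
  assume "oppair a b"
  then obtain i where "(a = XP i \<and> b = XM i) \<or> (a = XM i \<and> b = XP i)" unfolding oppair_def by blast
  moreover have "mn [a, b] = mn [a] * mn [b]" using mon_append[of "[a]" "[b]"] by simp
  ultimately show ?thesis using I0_pair1 I0_pair2 by metis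
qed

lemma red_pair:
  assumes "mn w - mn (u1 @ [a, b] @ u2) \<in> I0 \<alpha> p" "oppair a b" "mn (u1 @ u2) - ph r \<in> I0 \<alpha> p"
  shows "\<exists>r'. mn w - ph r' \<in> I0 \<alpha> p"
proof -
  obtain q where q: "mn [a, b] - ph q \<in> I0 \<alpha> p" using pair_q[OF assms(2)] by blast
  let ?q' = "shift (ws \<alpha> u1) q"
  have e: "mn (u1 @ [a, b] @ u2) = mn u1 * mn [a, b] * mn u2" by (simp only: mon_append mult.assoc)
  have s1: "mn (u1 @ [a, b] @ u2) - mn u1 * ph q * mn u2 \<in> I0 \<alpha> p"
    unfolding e by (rule I0_cong[OF q])
  have s2: "ph ?q' * mn (u1 @ u2) - ph ?q' * ph r * 1 \<in> I0 \<alpha> p"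
    using I0_cong[OF assms(3), of "ph ?q'" 1] by simp
  have "mn w - ph ?q' * ph r * 1 \<in> I0 \<alpha> p"
    by (rule I0_trans[OF assms(1) I0_trans[OF s1 I0_trans[OF move_mid s2]]])
  then have "mn w - ph (?q' * r) \<in> I0 \<alpha> p" by (simp add: ph_mult)
  then show ?thesis by blast
qed

lemma m1: "mn (XP I1 # replicate k (XM I2)) - mn (replicate k (XM I2) @ [XP I1]) \<in> I0 \<alpha> p"
proof -
  have e1: "mn (XP I1 # replicate k (XM I2)) = mn [XP I1] * mn [XM I2] ^ k"
    by (simp only: mon_Cons[of "XP I1" "replicate k (XM I2)"] mn_rep)
  have e2: "mn (replicate k (XM I2) @ [XP I1]) = mn [XM I2] ^ k * mn [XP I1]"
    by (simp only: mon_append mn_rep)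
  show ?thesis unfolding e1 e2 by (rule comm_pow[OF I0_cross1])
qed
lemma m2: "mn (XM I1 # replicate k (XP I2)) - mn (replicate k (XP I2) @ [XM I1]) \<in> I0 \<alpha> p"
proof -
  have e1: "mn (XM I1 # replicate k (XP I2)) = mn [XM I1] * mn [XP I2] ^ k"
    by (simp only: mon_Cons[of "XM I1" "replicate k (XP I2)"] mn_rep)
  have e2: "mn (replicate k (XP I2) @ [XM I1]) = mn [XP I2] ^ k * mn [XM I1]"
    by (simp only: mon_append mn_rep)
  show ?thesis unfolding e1 e2 by (rule comm_pow[OF I0_cross2])
qed
lemma m3: "mn (replicate k (XP I2) @ [XM I1]) - mn (XM I1 # replicate k (XP I2)) \<in> I0 \<alpha> p"
  by (rule I0_sym[OF m2])
lemma m4: "mn (replicate k (XM I2) @ [XP I1]) - mn (XP I1 # replicate k (XM I2)) \<in> I0 \<alpha> p"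
  by (rule I0_sym[OF m1])

lemma cong_mid: "mn u - mn v \<in> I0 \<alpha> p \<Longrightarrow> mn (w1 @ u @ w2) - mn (w1 @ v @ w2) \<in> I0 \<alpha> p"
  using I0_cong[of "mn u" "mn v" \<alpha> p "mn w1" "mn w2"] by (simp add: mon_append mult.assoc)

lemma wd_oppair: "oppair a b \<Longrightarrow> word_deg [a, b] = 0"
  by (auto simp: oppair_def word_deg_def fun_eq_iff)

lemma wd_split: "word_deg (u1 @ [a, b] @ u2) = word_deg (u1 @ u2) + word_deg [a, b]"
  by (simp only: word_deg_append add_ac)

lemma deg0_red: "word_deg w = 0 \<Longrightarrow> \<exists>r. mn w - ph r \<in> I0 \<alpha> p"
proof (induction "length w" arbitrary: w rule: less_induct)
  case less
  show ?case
  proof (cases "w = []")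
    case True
    then have "mn w - ph 1 = 0" by (simp add: ph_one)
    then show ?thesis using idc_0[OF I0_idc] by metis
  next
    case False
    show ?thesis
    proof (cases "G0 \<in> set w")
      case True
      then obtain u1 u2 where w: "w = u1 @ G0 # u2" by (meson split_list)
      have dz: "word_deg (u1 @ u2) = 0"
        using less.prems unfolding w by (simp add: word_deg_append word_deg_Cons zero_fun_def plus_fun_def)
      have lt: "length (u1 @ u2) < length w" using w by simp
      obtain r where r: "mn (u1 @ u2) - ph r \<in> I0 \<alpha> p"
        using less.hyps[OF lt dz] by (elim exE)
      let ?q' = "shift (ws \<alpha> u1) [:0, 1:]"
      have hh: "ph [:0, 1:] = mn [G0]" by (simp add: ph_def pe_X hH_def)
      have ww: "w = u1 @ [G0] @ u2" using w by simp
      have e: "mn w = mn u1 * ph [:0, 1:] * mn u2"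
        unfolding hh ww by (simp only: mon_append mult.assoc)
      have s2: "ph ?q' * mn (u1 @ u2) - ph ?q' * ph r * 1 \<in> I0 \<alpha> p"
        using I0_cong[OF r, of "ph ?q'" 1] by simp
      have "mn w - ph ?q' * ph r * 1 \<in> I0 \<alpha> p"
        unfolding e by (rule I0_trans[OF move_mid s2])
      then have "mn w - ph (?q' * r) \<in> I0 \<alpha> p" by (simp add: ph_mult)
      then show ?thesis by blast
    next
      case nG: False
      have "hasP w \<or> hasC w" by (rule pattern_exists[OF nG less.prems False])
      then show ?thesis
      proof
        assume "hasP w"
        then obtain u1 u2 a b where w: "w = u1 @ [a, b] @ u2" "oppair a b" unfolding hasP_def by blast
        have dz: "word_deg (u1 @ u2) = 0" using less.prems w wd_split[of u1 a b u2] wd_oppair[OF w(2)] by simp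
        have lt: "length (u1 @ u2) < length w" using w by simp
        obtain r where r: "mn (u1 @ u2) - ph r \<in> I0 \<alpha> p"
          using less.hyps[OF lt dz] by (elim exE)
        have "mn w - mn (u1 @ [a, b] @ u2) \<in> I0 \<alpha> p" using w idc_0[OF I0_idc] by simp
        then show ?thesis using red_pair w(2) r by blast
      next
        assume "hasC w"
        then obtain w1 w2 x k z y where w: "w = w1 @ [x] @ replicate k z @ [y] @ w2" "cpat x z y"
          unfolding hasC_def by blast
        have op: "oppair x y" using w(2) by (auto simp: cpat_def oppair_def)
        have dd: "word_deg (w1 @ replicate k z @ w2) = 0"
        proof -
          have "word_deg w = word_deg (w1 @ replicate k z @ w2) + word_deg [x, y]"
            unfolding w(1) by (simp only: word_deg_append word_deg_Cons word_deg_Nil add_0_left add_0_right add_ac)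
          then show ?thesis using less.prems wd_oppair[OF op] by simp
        qed
        have lt: "length (w1 @ replicate k z @ w2) < length w" using w by simp
        obtain r where r: "mn (w1 @ replicate k z @ w2) - ph r \<in> I0 \<alpha> p"
          using less.hyps[OF lt dd] by (elim exE)
        consider (A) "x = XP I1" "y = XM I1" "z = XM I2" | (B) "x = XP I1" "y = XM I1" "z = XP I2"
          | (Cc) "x = XM I1" "y = XP I1" "z = XP I2" | (Dd) "x = XM I1" "y = XP I1" "z = XM I2"
          using w(2) unfolding cpat_def by blast
        then show ?thesis
        proof cases
          case A
          have "mn w - mn ((w1 @ replicate k z) @ [x, y] @ w2) \<in> I0 \<alpha> p"
            using cong_mid[OF m1[of k \<alpha> p], of w1 "y # w2"] A w(1) by simp
          then show ?thesis using red_pair op r by fastforce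
        next
          case B
          have "mn w - mn (w1 @ [x, y] @ (replicate k z @ w2)) \<in> I0 \<alpha> p"
            using cong_mid[OF m3[of k \<alpha> p], of "w1 @ [x]" w2] B w(1) by simp
          then show ?thesis using red_pair op r by fastforce
        next
          case Cc
          have "mn w - mn ((w1 @ replicate k z) @ [x, y] @ w2) \<in> I0 \<alpha> p"
            using cong_mid[OF m2[of k \<alpha> p], of w1 "y # w2"] Cc w(1) by simp
          then show ?thesis using red_pair op r by fastforce
        next
          case Dd
          have "mn w - mn (w1 @ [x, y] @ (replicate k z @ w2)) \<in> I0 \<alpha> p"
            using cong_mid[OF m4[of k \<alpha> p], of "w1 @ [x]" w2] Dd w(1) by simp
          then show ?thesis using red_pair op r by fastforce
        qed
      qed
    qed
  qed
qed


lemma sum_single: "z = (\<Sum>k\<in>ks z. sg k (lk z k))"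
proof (rule poly_mapping_eqI)
  fix j
  have "lk (\<Sum>k\<in>ks z. sg k (lk z k)) j = (\<Sum>k\<in>ks z. if k = j then lk z k else 0)"
    by (simp add: Poly_Mapping.lookup_sum Poly_Mapping.lookup_single when_def)
  also have "\<dots> = (if j \<in> ks z then lk z j else 0)" by (simp add: sum.delta)
  also have "\<dots> = lk z j" by (auto simp: in_keys_iff)
  finally show "lk z j = lk (\<Sum>k\<in>ks z. sg k (lk z k)) j" by simp
qed

lemma ph_sum: "ph (\<Sum>k\<in>S. f k) = (\<Sum>k\<in>S. ph (f k))"
  by (induction S rule: infinite_finite_induct) (simp_all add: ph_def pe_add)
lemma ph_smult: "ph (smult c r) = C c * ph r" by (simp add: ph_def pe_smult)

lemma homog0_red: assumes "homog 0 z" shows "\<exists>r. z - ph r \<in> I0 \<alpha> p"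
proof -
  have "\<forall>k\<in>ks z. \<exists>r. mn (unW k) - ph r \<in> I0 \<alpha> p"
  proof
    fix k assume "k \<in> ks z"
    then have "word_deg (unW k) = 0" using assms by (simp add: homog_def wdeg_def)
    then show "\<exists>r. mn (unW k) - ph r \<in> I0 \<alpha> p" by (rule deg0_red)
  qed
  then obtain R where R: "\<And>k. k \<in> ks z \<Longrightarrow> mn (unW k) - ph (R k) \<in> I0 \<alpha> p" by metis
  have "z - ph (\<Sum>k\<in>ks z. smult (lk z k) (R k)) = (\<Sum>k\<in>ks z. C (lk z k) * (mn (unW k) - ph (R k)))"
    apply (subst (1) sum_single[of z])
    by (simp add: ph_sum ph_smult sg_eq sum_subtractf right_diff_distrib)
  also have "\<dots> \<in> I0 \<alpha> p" by (rule idc_sum[OF I0_idc]) (rule idc_lmul[OF I0_idc R])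
  finally show ?thesis by blast
qed

fun opp :: "gen \<Rightarrow> gen" where "opp G0 = G0" | "opp (XP i) = XM i" | "opp (XM i) = XP i"

lemma prod_opp:
  assumes "p I1 \<noteq> 0" "p I2 \<noteq> 0" "G0 \<notin> set u"
  shows "\<exists>g. g \<noteq> 0 \<and> mn (rev (map opp u)) * mn u - ph g \<in> I0 \<alpha> p"
  using assms(3)
proof (induction u)
  case Nil then show ?case by (intro exI[of _ 1]) (simp add: ph_one idc_0[OF I0_idc])
next
  case (Cons a u)
  obtain g where g: "g \<noteq> 0" "mn (rev (map opp u)) * mn u - ph g \<in> I0 \<alpha> p" using Cons by auto
  have pi: "p i \<noteq> 0" for i using assms(1,2) by (cases i) auto
  have "\<exists>q. q \<noteq> 0 \<and> mn [opp a] * mn [a] - ph q \<in> I0 \<alpha> p"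
  proof (cases a)
    case G0 then show ?thesis using Cons.prems by simp
  next
    case (XP i) then show ?thesis using I0_pair2[of i \<alpha> p] shift_nz[OF pi] by auto
  next
    case (XM i) then show ?thesis using I0_pair1[of i \<alpha> p] shift_nz[OF pi] by auto
  qed
  then obtain q where q: "q \<noteq> 0" "mn [opp a] * mn [a] - ph q \<in> I0 \<alpha> p" by blast
  let ?R = "rev (map opp u)"
  let ?q' = "shift (ws \<alpha> ?R) q"
  have e1: "mn (rev (map opp (a # u))) = mn ?R * mn [opp a]" by (simp add: mon_append)
  have e2: "mn (a # u) = mn [a] * mn u" by (rule mon_Cons)
  have e: "mn (rev (map opp (a # u))) * mn (a # u) - ph (?q' * g)
    = mn ?R * (mn [opp a] * mn [a] - ph q) * mn u + (mn ?R * ph q - ph ?q' * mn ?R) * mn u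
      + ph ?q' * (mn ?R * mn u - ph g)"
    unfolding e1 e2 by (simp add: ph_mult algebra_simps ph_comm)
  have "mn (rev (map opp (a # u))) * mn (a # u) - ph (?q' * g) \<in> I0 \<alpha> p"
    unfolding e
    by (intro idc_add[OF I0_idc] idc_rmul[OF I0_idc] idc_lmul[OF I0_idc] q(2) mn_ph g(2))
  moreover have "?q' * g \<noteq> 0" using shift_nz[OF q(1)] g(1) by simp
  ultimately show ?case by blast
qed

definition mword :: "(idx \<Rightarrow> int) \<Rightarrow> gen list" where
  "mword d = replicate (nat \<bar>d I1\<bar>) (if d I1 \<ge> 0 then XM I1 else XP I1)
           @ replicate (nat \<bar>d I2\<bar>) (if d I2 \<ge> 0 then XM I2 else XP I2)"

lemma word_deg_rep: "word_deg (replicate n g) j = int n * gen_deg g j"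
  by (induction n) (simp_all add: word_deg_Cons word_deg_Nil algebra_simps)

lemma mword_deg: "word_deg (mword d) = - d"
proof
  fix j show "word_deg (mword d) j = (- d) j"
    by (cases j) (auto simp: mword_def word_deg_append word_deg_rep)
qed

lemma mword_G0: "G0 \<notin> set (mword d)"
  by (auto simp: mword_def split: if_splits)

lemma hc_sum: "hc d (\<Sum>k\<in>S. f k) = (\<Sum>k\<in>S. hc d (f k))"
  by (induction S rule: infinite_finite_induct) (simp_all add: hc_add hc_zero)

lemma hc_homog0_mult: assumes "homog 0 a" shows "hc d (a * x) = a * hc d x"
proof -
  have "hc d (a * x) = hc d ((\<Sum>k\<in>ks a. sg k (lk a k)) * x)" by (subst (1) sum_single[of a]) simp
  also have "\<dots> = (\<Sum>k\<in>ks a. hc d (sg k (lk a k) * x))" by (simp add: sum_distrib_right hc_sum)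
  also have "\<dots> = (\<Sum>k\<in>ks a. sg k (lk a k) * hc d x)"
    using assms by (intro sum.cong) (auto simp: hc_mult_left homog_def)
  also have "\<dots> = a * hc d x" by (subst (2) sum_single[of a]) (simp add: sum_distrib_right)
  finally show ?thesis .
qed

definition goodA :: "(idx \<Rightarrow> complex) \<Rightarrow> (idx \<Rightarrow> complex poly) \<Rightarrow> fa set \<Rightarrow> bool" where
  "goodA \<alpha> p X \<longleftrightarrow> idc X \<and> I0 \<alpha> p \<subseteq> X \<and> (\<forall>a\<in>X. \<forall>d. hc d a \<in> X) \<and>
                     (\<forall>r. ph r \<in> X \<longrightarrow> ph r \<in> I0 \<alpha> p)"

lemma goodA_tor:
  assumes p: "p I1 \<noteq> 0" "p I2 \<noteq> 0" and G: "goodA \<alpha> p X"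
  shows "X \<subseteq> tor \<alpha> p"
proof -
  have X: "idc X" "I0 \<alpha> p \<subseteq> X" "\<And>a d. a \<in> X \<Longrightarrow> hc d a \<in> X" "\<And>r. ph r \<in> X \<Longrightarrow> ph r \<in> I0 \<alpha> p"
    using G unfolding goodA_def by blast+
  have hom: "y \<in> tor \<alpha> p" if y: "y \<in> X" "homog d y" for y d
  proof -
    let ?M = "mn (mword d)"
    have hM: "homog 0 (?M * y)"
    proof -
      have "homog (word_deg (mword d) + d) (?M * y)" by (rule homog_mult[OF homog_mn y(2)])
      moreover have "word_deg (mword d) + d = 0" by (simp add: mword_deg)
      ultimately show ?thesis by simp
    qed
    obtain r where r: "?M * y - ph r \<in> I0 \<alpha> p" using homog0_red[OF hM] by blast
    have My: "?M * y \<in> X" using idc_lmul[OF X(1) y(1)] .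
    have "ph r = ?M * y - (?M * y - ph r)" by simp
    also have "\<dots> \<in> X" using idc_diff[OF X(1) My] r X(2) by blast
    finally have "ph r \<in> I0 \<alpha> p" using X(4) by blast
    then have MyI: "?M * y \<in> I0 \<alpha> p" using idc_add[OF I0_idc r, of "ph r"] by simp
    obtain g where g: "g \<noteq> 0" "mn (rev (map opp (mword d))) * ?M - ph g \<in> I0 \<alpha> p"
      using prod_opp[OF p mword_G0] by blast
    have "ph g * y = mn (rev (map opp (mword d))) * (?M * y) - (mn (rev (map opp (mword d))) * ?M - ph g) * y"
      by (simp add: algebra_simps)
    also have "\<dots> \<in> I0 \<alpha> p"
      by (rule idc_diff[OF I0_idc idc_lmul[OF I0_idc MyI] idc_rmul[OF I0_idc g(2)]])
    finally show ?thesis using g(1) unfolding tor_def by blast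
  qed
  show ?thesis
  proof
    fix x assume x: "x \<in> X"
    have "(\<Sum>d\<in>wdeg ` ks x. hc d x) \<in> tor \<alpha> p"
      by (rule idc_sum[OF tor_idc]) (rule hom[OF X(3)[OF x] homog_hc])
    then show "x \<in> tor \<alpha> p" using hc_decomp[of x] by simp
  qed
qed

lemma tor_goodA:
  assumes hyp: "shift (\<alpha> I2 / 2) (p I1) * shift (\<alpha> I1 / 2) (p I2)
         = shift (- \<alpha> I2 / 2) (p I1) * shift (- \<alpha> I1 / 2) (p I2)"
  shows "goodA \<alpha> p (tor \<alpha> p)"
  unfolding goodA_def
proof (intro conjI ballI allI impI)
  show "idc (tor \<alpha> p)" by (rule tor_idc)
  show "I0 \<alpha> p \<subseteq> tor \<alpha> p" by (rule I0_tor)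
next
  fix a d assume "a \<in> tor \<alpha> p"
  then obtain f where f: "f \<noteq> 0" "ph f * a \<in> I0 \<alpha> p" unfolding tor_def by blast
  have "ph f * hc d a = hc d (ph f * a)" by (simp add: hc_homog0_mult[OF homog_ph])
  also have "\<dots> \<in> I0 \<alpha> p" by (rule I0_graded[OF f(2)])
  finally show "hc d a \<in> tor \<alpha> p" using f(1) unfolding tor_def by blast
next
  fix r assume "ph r \<in> tor \<alpha> p"
  then obtain f where f: "f \<noteq> 0" "ph f * ph r \<in> I0 \<alpha> p" unfolding tor_def by blast
  then have "ph (f * r) \<in> I0 \<alpha> p" by (simp add: ph_mult)
  then have "f * r = 0" by (rule ph_I0_zero[OF hyp])
  then have "r = 0" using f(1) by simp
  then show "ph r \<in> I0 \<alpha> p" by (simp add: ph_def idc_0[OF I0_idc])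
qed


lemma gH_rep: "(fa_gen G0 :: gen list \<Rightarrow> complex) = rep hH" by (simp add: rep_gen hH_def)
lemma poly_gH: "fa_poly r (fa_gen G0) = rep (ph r)" by (simp add: gH_rep rep_pe ph_def)

lemma tilde_tgwa: "tgwa_tilde_ideal \<alpha> p = rep ` I0 \<alpha> p"
  by (simp add: tgwa_tilde_ideal_def tgwa_rels_rep genideal_rep)
lemma tilde_kfp: "kfp_tilde_ideal \<alpha> p = rep ` I0 \<alpha> p"
  by (simp add: kfp_tilde_ideal_def kfp_rels_rep genideal_rep krels_trels)

lemma torsion_rep: "kfp_torsion \<alpha> p = rep ` tor \<alpha> p"
proof (intro equalityI subsetI)
  fix x :: "gen list \<Rightarrow> complex"
    assume x: "x \<in> kfp_torsion \<alpha> p"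
    then have "x \<in> carrier FAg" by (simp add: kfp_torsion_def)
    then obtain a where a: "x = rep a" by (rule carrier_fa_E)
    obtain f where "f \<noteq> 0" "fa_mult (fa_poly f (fa_gen G0)) x \<in> kfp_tilde_ideal \<alpha> p"
      using x by (auto simp: kfp_torsion_def)
    then have "f \<noteq> 0" "ph f * a \<in> I0 \<alpha> p"
      by (simp_all add: a poly_gH fa_mult_rep tilde_kfp)
    then show "x \<in> rep ` tor \<alpha> p" unfolding a tor_def by auto
  next
  fix x :: "gen list \<Rightarrow> complex"
    assume "x \<in> rep ` tor \<alpha> p"
    then obtain a f where a: "x = rep a" "f \<noteq> 0" "ph f * a \<in> I0 \<alpha> p" by (auto simp: tor_def)
    have "fa_mult (fa_poly f (fa_gen G0)) x \<in> kfp_tilde_ideal \<alpha> p"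
      using a by (simp add: poly_gH fa_mult_rep tilde_kfp)
    then show "x \<in> kfp_torsion \<alpha> p" using a rep_carrier unfolding kfp_torsion_def by blast
qed

lemma good_sub:
  assumes p: "p I1 \<noteq> 0" "p I2 \<noteq> 0" and G: "tgwa_good_ideal \<alpha> p J"
  shows "J \<subseteq> rep ` tor \<alpha> p"
proof -
  have J: "ideal J FAg" "tgwa_tilde_ideal \<alpha> p \<subseteq> J" "\<And>f d. f \<in> J \<Longrightarrow> hom_comp d f \<in> J"
    "\<And>r. fa_poly r (fa_gen G0) \<in> J \<Longrightarrow> fa_poly r (fa_gen G0) \<in> tgwa_tilde_ideal \<alpha> p"
    using G unfolding tgwa_good_ideal_def by blast+
  let ?X = "{a. rep a \<in> J}"
  have "goodA \<alpha> p ?X"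
    unfolding goodA_def
  proof (intro conjI ballI allI impI)
    show "idc ?X" by (rule ideal_idc(1)[OF J(1)])
    show "I0 \<alpha> p \<subseteq> ?X" using J(2) by (auto simp: tilde_tgwa)
  next
    fix a d assume "a \<in> ?X"
    then show "hc d a \<in> ?X" using J(3)[of "rep a" d] by (simp add: rep_hc)
  next
    fix r assume "ph r \<in> ?X"
    then show "ph r \<in> I0 \<alpha> p" using J(4)[of r] by (simp add: poly_gH tilde_tgwa)
  qed
  then have "?X \<subseteq> tor \<alpha> p" by (rule goodA_tor[OF p])
  moreover have "J = rep ` ?X" by (rule ideal_idc(2)[OF J(1)])
  ultimately show ?thesis by blast
qed

lemma tor_good:
  assumes hyp: "shift (\<alpha> I2 / 2) (p I1) * shift (\<alpha> I1 / 2) (p I2)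
         = shift (- \<alpha> I2 / 2) (p I1) * shift (- \<alpha> I1 / 2) (p I2)"
  shows "tgwa_good_ideal \<alpha> p (rep ` tor \<alpha> p)"
proof -
  have G: "idc (tor \<alpha> p)" "I0 \<alpha> p \<subseteq> tor \<alpha> p" "\<And>a d. a \<in> tor \<alpha> p \<Longrightarrow> hc d a \<in> tor \<alpha> p"
    "\<And>r. ph r \<in> tor \<alpha> p \<Longrightarrow> ph r \<in> I0 \<alpha> p"
    using tor_goodA[OF hyp] unfolding goodA_def by blast+
  show ?thesis
    unfolding tgwa_good_ideal_def
  proof (intro conjI ballI allI impI)
    show "ideal (rep ` tor \<alpha> p) FAg" by (rule idc_ideal[OF G(1)])
    show "tgwa_tilde_ideal \<alpha> p \<subseteq> rep ` tor \<alpha> p" using G(2) by (auto simp: tilde_tgwa)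
  next
    fix f d assume "f \<in> rep ` tor \<alpha> p"
    then obtain a where "f = rep a" "a \<in> tor \<alpha> p" by blast
    then show "hom_comp d f \<in> rep ` tor \<alpha> p" using G(3) by (simp add: rep_hc)
  next
    fix r assume "fa_poly r (fa_gen G0) \<in> rep ` tor \<alpha> p"
    then show "fa_poly r (fa_gen G0) \<in> tgwa_tilde_ideal \<alpha> p" using G(4) by (simp add: poly_gH tilde_tgwa)
  qed
qed

lemma gid_tor: "gid (tor \<alpha> p) = tor \<alpha> p"
  using gid_min[OF tor_idc] gid_sub by blast

lemma kfp_ideal_rep: "kfp_ideal \<alpha> p = rep ` tor \<alpha> p"
proof -
  have "kfp_tilde_ideal \<alpha> p \<union> kfp_torsion \<alpha> p = rep ` tor \<alpha> p"
    using I0_tor[of \<alpha> p] by (auto simp: tilde_kfp torsion_rep)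
  then show ?thesis by (simp add: kfp_ideal_def genideal_rep gid_tor)
qed

lemma tgwa_ideal_rep:
  assumes p: "p I1 \<noteq> 0" "p I2 \<noteq> 0"
    and hyp: "shift (\<alpha> I2 / 2) (p I1) * shift (\<alpha> I1 / 2) (p I2)
         = shift (- \<alpha> I2 / 2) (p I1) * shift (- \<alpha> I1 / 2) (p I2)"
  shows "tgwa_ideal \<alpha> p = rep ` tor \<alpha> p"
proof -
  have U: "\<Union>{J. tgwa_good_ideal \<alpha> p J} = rep ` tor \<alpha> p"
    using good_sub[OF p] tor_good[OF hyp] by blast
  have "tgwa_tilde_ideal \<alpha> p \<union> \<Union>{J. tgwa_good_ideal \<alpha> p J} = rep ` tor \<alpha> p"
    unfolding U using I0_tor[of \<alpha> p] by (auto simp: tilde_tgwa)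
  then show ?thesis by (simp add: tgwa_ideal_def genideal_rep gid_tor)
qed

theorem mainTheorem7:
  fixes \<alpha> :: "idx \<Rightarrow> complex" and p :: "idx \<Rightarrow> complex poly"
  assumes "p I1 \<noteq> 0" and "p I2 \<noteq> 0"
    and "shift (\<alpha> I2 / 2) (p I1) * shift (\<alpha> I1 / 2) (p I2)
         = shift (- \<alpha> I2 / 2) (p I1) * shift (- \<alpha> I1 / 2) (p I2)"
  shows "\<exists>\<phi>. \<phi> \<in> ring_iso (KFP \<alpha> p) (TGWA \<alpha> p) \<and>
           (\<forall>c. \<phi> (kfp_ideal \<alpha> p +>\<^bsub>free_alg\<^esub> fa_const c) = tgwa_ideal \<alpha> p +>\<^bsub>free_alg\<^esub> fa_const c)"
proof -
  have eq: "kfp_ideal \<alpha> p = tgwa_ideal \<alpha> p"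
    using kfp_ideal_rep tgwa_ideal_rep[OF assms] by simp
  have "KFP \<alpha> p = TGWA \<alpha> p" by (simp add: KFP_def TGWA_def eq)
  then show ?thesis
    by (intro exI[of _ id]) (simp add: ring_iso_set_refl eq)
qed


end
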